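(* Let $\mathscr{D}$ be a nonnegative integer-valued random variable with $\mathbb{P}(\mathscr{D}>t)=\mathcal{L}(t)t^{-\gamma}$, $\mathcal{L}$ slowly varying, $1<\gamma<2$, $\mu=\mathbb{E}[\mathscr D]$. Let $D_1,\dots,D_n$ be i.i.d. copies and $\widehat G_n$ the erased configuration model with these degrees. For $\varepsilon>0$ let $B_n(\varepsilon)=[\varepsilon\sqrt{\mu n},\sqrt{\mu n}/\varepsilon]$ and let $\triangle_n(\bar B_n(\varepsilon))=\sum_{1\le i<j<k\le n}\widehat X_{ij}\widehat X_{jk}\widehat X_{ik}\mathbf 1\{D_i\notin B_n(\varepsilon)\text{ or }D_j\notin B_n(\varepsilon)\text{ or }D_k\notin B_n(\varepsilon)\}$ be the number of triangles of $\widehat G_n$ with at least one sampled degree outside $B_n(\varepsilon)$. Then there is a function $\mathcal E_1(\varepsilon)$, not depending on $n$, with $\mathcal E_1(\varepsilon)\to0$ as $\varepsilon\to0$, such that \[ \limsup_{n\to\infty}\frac{\mathbb E[\triangle_n(\bar B_n(\varepsilon))]}{\mathcal L(\sqrt{\mu n})^3n^{\frac32(2-\gamma)}}=O(\mathcal E_1(\varepsilon)). \]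
   Context: Configuration model: vertex $i$ gets $D_i$ half-edges (one added if the sum is odd; ignored), paired uniformly at random; the erased configuration model removes self-loops and merges multiple edges, with $\widehat X_{ij}\in\{0,1\}$ its edge indicators. The $D_i$ are the sampled degrees (of the configuration model before erasure). *)

theory Defs
  imports "HOL-Probability.Probability"
begin

definition slowly_varying :: "(real \<Rightarrow> real) \<Rightarrow> bool" where
  "slowly_varying L \<longleftrightarrow> (\<forall>c>0. ((\<lambda>t. L (c * t) / L t) \<longlongrightarrow> 1) at_top)"

text \<open>Configuration model on vertices 0..n-1 with degrees d: if the total degree is odd,
  one extra half-edge is added (to vertex 0).\<close>
definition deg_ext :: "nat \<Rightarrow> (nat \<Rightarrow> nat) \<Rightarrow> nat \<Rightarrow> nat" where
  "deg_ext n d i = d i + (if i = 0 \<and> odd (\<Sum>j<n. d j) then 1 else 0)"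

definition half_edges :: "nat \<Rightarrow> (nat \<Rightarrow> nat) \<Rightarrow> (nat \<times> nat) set" where
  "half_edges n d = {(i, k). i < n \<and> k < deg_ext n d i}"

text \<open>Perfect matchings (pairings) of a set H of half-edges, as fixed-point-free
  involutions of H, extended by the identity outside H.\<close>
definition matchings :: "('h set) \<Rightarrow> ('h \<Rightarrow> 'h) set" where
  "matchings H = {m. (\<forall>h\<in>H. m h \<in> H \<and> m h \<noteq> h \<and> m (m h) = h) \<and> (\<forall>h. h \<notin> H \<longrightarrow> m h = h)}"

definition cm_model :: "nat \<Rightarrow> nat pmf \<Rightarrow> ((nat \<Rightarrow> nat) \<times> (nat \<times> nat \<Rightarrow> nat \<times> nat)) pmf" where
  "cm_model n p =
     Pi_pmf {..<n} 0 (\<lambda>_. p) \<bind>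
       (\<lambda>d. pmf_of_set (matchings (half_edges n d)) \<bind> (\<lambda>m. return_pmf (d, m)))"

text \<open>Edge indicator of the erased configuration model: no self-loops, multi-edges merged.\<close>
definition ecm_edge :: "nat \<Rightarrow> (nat \<Rightarrow> nat) \<Rightarrow> (nat \<times> nat \<Rightarrow> nat \<times> nat) \<Rightarrow> nat \<Rightarrow> nat \<Rightarrow> real" where
  "ecm_edge n d m i j =
     (if i \<noteq> j \<and> (\<exists>k l. (i, k) \<in> half_edges n d \<and> (j, l) \<in> half_edges n d \<and> m (i, k) = (j, l))
      then 1 else 0)"

definition Bn :: "real \<Rightarrow> nat \<Rightarrow> real \<Rightarrow> real set" where
  "Bn mu n eps = {eps * sqrt (mu * real n) .. sqrt (mu * real n) / eps}"

definition tri_out :: "real \<Rightarrow> nat \<Rightarrow> real \<Rightarrow> (nat \<Rightarrow> nat) \<Rightarrow> (nat \<times> nat \<Rightarrow> nat \<times> nat) \<Rightarrow> real" where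
  "tri_out mu n eps d m =
     (\<Sum>i<n. \<Sum>j\<in>{i<..<n}. \<Sum>k\<in>{j<..<n}.
        ecm_edge n d m i j * ecm_edge n d m j k * ecm_edge n d m i k *
        (if real (d i) \<notin> Bn mu n eps \<or> real (d j) \<notin> Bn mu n eps \<or> real (d k) \<notin> Bn mu n eps
         then 1 else 0))"

end

theory Submission
  imports Defs
begin

definition sw :: "'a \<Rightarrow> 'a \<Rightarrow> 'a \<Rightarrow> 'a" where
  "sw a b x = (if x = a then b else if x = b then a else x)"

definition cnj :: "'a \<Rightarrow> 'a \<Rightarrow> ('a \<Rightarrow> 'a) \<Rightarrow> ('a \<Rightarrow> 'a)" where
  "cnj a b m = (\<lambda>x. sw a b (m (sw a b x)))"

lemma sw_sw [simp]: "sw a b (sw a b x) = x"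
  by (auto simp: sw_def)

lemma sw_inj: "sw a b x = sw a b y \<longleftrightarrow> x = y"
  by (metis sw_sw)

lemma cnj_cnj [simp]: "cnj a b (cnj a b m) = m"
  by (auto simp: cnj_def)

lemma matchingsD:
  assumes "m \<in> matchings H"
  shows "\<And>h. h \<in> H \<Longrightarrow> m h \<in> H" "\<And>h. h \<in> H \<Longrightarrow> m h \<noteq> h" "\<And>h. h \<in> H \<Longrightarrow> m (m h) = h"
    "\<And>h. h \<notin> H \<Longrightarrow> m h = h"
  using assms by (auto simp: matchings_def)

lemma cnj_matching:
  assumes m: "m \<in> matchings H" and a: "a \<in> H" and b: "b \<in> H"
  shows "cnj a b m \<in> matchings H"
proof -
  have swH: "sw a b h \<in> H" if "h \<in> H" for h using that a b by (auto simp: sw_def)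
  have swO: "sw a b h = h" if "h \<notin> H" for h using that a b by (auto simp: sw_def)
  show ?thesis
    unfolding matchings_def
  proof (intro CollectI conjI ballI allI impI)
    fix h assume h: "h \<in> H"
    show "cnj a b m h \<in> H" using swH[OF matchingsD(1)[OF m swH[OF h]]] by (simp add: cnj_def)
    show "cnj a b m h \<noteq> h"
    proof
      assume "cnj a b m h = h"
      hence "m (sw a b h) = sw a b h" unfolding cnj_def by (metis sw_sw)
      with matchingsD(2)[OF m swH[OF h]] show False by simp
    qed
    show "cnj a b m (cnj a b m h) = h"
      using matchingsD(3)[OF m swH[OF h]] by (simp add: cnj_def)
  next
    fix h assume "h \<notin> H"
    thus "cnj a b m h = h" using swO matchingsD(4)[OF m] by (simp add: cnj_def)
  qed
qed

lemma finite_matchings: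
  assumes "finite H"
  shows "finite (matchings H)"
proof -
  have "inj_on (\<lambda>m. restrict m H) (matchings H)"
  proof (rule inj_onI)
    fix m m' assume "m \<in> matchings H" "m' \<in> matchings H" "restrict m H = restrict m' H"
    show "m = m'"
    proof
      fix h show "m h = m' h"
      proof (cases "h \<in> H")
        case True thus ?thesis using \<open>restrict m H = restrict m' H\<close> by (metis restrict_apply')
      next
        case False thus ?thesis using \<open>m \<in> matchings H\<close> \<open>m' \<in> matchings H\<close> by (simp add: matchingsD(4))
      qed
    qed
  qed
  moreover have "(\<lambda>m. restrict m H) ` matchings H \<subseteq> PiE H (\<lambda>_. H)"
    by (auto simp: matchings_def)
  moreover have "finite (PiE H (\<lambda>_. H))" using assms by (intro finite_PiE) auto
  ultimately show ?thesis
    by (meson finite_imageD finite_subset)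
qed

lemma matchings_nonempty:
  assumes "finite H" "even (card H)"
  shows "matchings H \<noteq> {}"
  using assms
proof (induction "card H" arbitrary: H rule: less_induct)
  case less
  show ?case
  proof (cases "H = {}")
    case True
    hence "id \<in> matchings H" by (auto simp: matchings_def)
    thus ?thesis by blast
  next
    case False
    then obtain a where a: "a \<in> H" by blast
    have "card H \<noteq> 1" using less.prems by auto
    moreover have "card H > 0" using False less.prems by (simp add: card_gt_0_iff)
    ultimately have "card (H - {a}) > 0" using a less.prems by simp
    then obtain b where b: "b \<in> H - {a}" by (metis card_gt_0_iff ex_in_conv)
    let ?H' = "H - {a, b}"
    have "card {a, b} = 2" using b by auto
    hence c: "card ?H' = card H - 2" using a b less.prems by (simp add: card_Diff_subset)
    have "card ?H' < card H" using c \<open>card H > 0\<close> by simp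
    moreover have "even (card ?H')" using c less.prems \<open>card H > 0\<close> \<open>card H \<noteq> 1\<close>
      by (simp add: even_diff_nat)
    ultimately obtain m where m: "m \<in> matchings ?H'" using less by fastforce
    define m' where "m' = m(a := b, b := a)"
    have "m' \<in> matchings H"
      unfolding matchings_def
    proof (intro CollectI conjI ballI allI impI)
      fix h assume h: "h \<in> H"
      show "m' h \<in> H" using h a b matchingsD(1)[OF m, of h] by (auto simp: m'_def)
      show "m' h \<noteq> h" using h b matchingsD(2)[OF m, of h] by (auto simp: m'_def)
      show "m' (m' h) = h" using h b matchingsD(1,3)[OF m, of h] by (auto simp: m'_def)
    next
      fix h assume "h \<notin> H" thus "m' h = h" using a b matchingsD(4)[OF m, of h] by (auto simp: m'_def)
    qed
    thus ?thesis by blast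
  qed
qed

lemma step_card:
  assumes H: "finite H" and A: "A \<subseteq> matchings H" and T: "T \<subseteq> H" and x: "x \<in> T" and y: "y \<in> H - T"
    and cl: "\<And>m a b. m \<in> A \<Longrightarrow> a \<in> H - T \<Longrightarrow> b \<in> H - T \<Longrightarrow> cnj a b m \<in> A"
  shows "card {m\<in>A. m x = y} * card (H - T) \<le> card A"
proof -
  have finA: "finite A" using finite_subset[OF A finite_matchings[OF H]] .
  have eq: "card {m\<in>A. m x = e} = card {m\<in>A. m x = y}" if e: "e \<in> H - T" for e
  proof -
    have "bij_betw (cnj y e) {m\<in>A. m x = y} {m\<in>A. m x = e}"
    proof (rule bij_betw_byWitness[where f' = "cnj y e"])
      show "\<forall>m\<in>{m \<in> A. m x = y}. cnj y e (cnj y e m) = m" by simp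
      show "\<forall>m\<in>{m \<in> A. m x = e}. cnj y e (cnj y e m) = m" by simp
      have swx: "sw y e x = x" using x y e by (auto simp: sw_def)
      show "cnj y e ` {m \<in> A. m x = y} \<subseteq> {m \<in> A. m x = e}"
      proof (rule image_subsetI)
        fix m assume m: "m \<in> {m \<in> A. m x = y}"
        have 1: "cnj y e m \<in> A" using cl[OF _ y e] m by blast
        have "cnj y e m x = sw y e y" using swx m by (simp add: cnj_def)
        also have "\<dots> = e" by (simp add: sw_def)
        finally show "cnj y e m \<in> {m \<in> A. m x = e}" using 1 by blast
      qed
      show "cnj y e ` {m \<in> A. m x = e} \<subseteq> {m \<in> A. m x = y}"
      proof (rule image_subsetI)
        fix m assume m: "m \<in> {m \<in> A. m x = e}"
        have 1: "cnj y e m \<in> A" using cl[OF _ y e] m by blast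
        have "cnj y e m x = sw y e e" using swx m by (simp add: cnj_def)
        also have "\<dots> = y" by (simp add: sw_def)
        finally show "cnj y e m \<in> {m \<in> A. m x = y}" using 1 by blast
      qed
    qed
    thus ?thesis by (simp add: bij_betw_same_card)
  qed
  have "card A \<ge> card (\<Union>e\<in>H - T. {m\<in>A. m x = e})"
    by (intro card_mono finA) auto
  also have "card (\<Union>e\<in>H - T. {m\<in>A. m x = e}) = (\<Sum>e\<in>H - T. card {m\<in>A. m x = e})"
    by (rule card_UN_disjoint) (use H finA in auto)
  also have "\<dots> = (\<Sum>e\<in>H - T. card {m\<in>A. m x = y})"
    by (rule sum.cong) (use eq in auto)
  finally show ?thesis by (simp add: mult.commute)
qed

definition Abar :: "('h \<Rightarrow> 'h) set \<Rightarrow> ('h \<times> 'h) set \<Rightarrow> ('h \<Rightarrow> 'h) set" where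
  "Abar M S = {m \<in> M. \<forall>(x, y)\<in>S. m x = y}"

definition Vs :: "('h \<times> 'h) set \<Rightarrow> 'h set" where
  "Vs S = fst ` S \<union> snd ` S"

definition goodS :: "'h set \<Rightarrow> ('h \<times> 'h) set \<Rightarrow> bool" where
  "goodS H S \<longleftrightarrow> (\<forall>(x, y)\<in>S. x \<noteq> y \<and> x \<in> H \<and> y \<in> H \<and>
      (\<forall>(x', y')\<in>S. (x, y) \<noteq> (x', y') \<longrightarrow> x \<noteq> x' \<and> x \<noteq> y' \<and> y \<noteq> x' \<and> y \<noteq> y'))"

lemma goodS_subset: "goodS H S' \<Longrightarrow> S \<subseteq> S' \<Longrightarrow> goodS H S"
  unfolding goodS_def by blast

lemma card_Vs: "finite S \<Longrightarrow> card (Vs S) \<le> 2 * card S"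
proof -
  assume "finite S"
  have "card (Vs S) \<le> card (fst ` S) + card (snd ` S)" unfolding Vs_def by (rule card_Un_le)
  also have "\<dots> \<le> card S + card S" by (intro add_mono card_image_le \<open>finite S\<close>)
  finally show ?thesis by simp
qed

lemma Abar_bound:
  assumes H: "finite H" and S: "finite S" "goodS H S" "card S \<le> 3" and l: "card H \<ge> 6"
  shows "real (card (Abar (matchings H) S)) * (real (card H) - 5) ^ card S \<le> real (card (matchings H))"
  using S
proof (induction S rule: finite_induct)
  case empty
  thus ?case by (simp add: Abar_def)
next
  case (insert xy S)
  obtain x y where xy: "xy = (x, y)" by (cases xy)
  have gS: "goodS H S" using insert.prems goodS_subset by blast
  have cS: "card S \<le> 2" using insert.prems insert.hyps by simp
  have IH: "real (card (Abar (matchings H) S)) * (real (card H) - 5) ^ card S \<le> real (card (matchings H))"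
    using insert.IH gS cS by simp
  have g: "goodS H (insert (x, y) S)" using insert.prems xy by simp
  have xyH: "x \<in> H" "y \<in> H" "x \<noteq> y" using g unfolding goodS_def by auto
  have xV: "x \<notin> Vs S" and yV: "y \<notin> Vs S"
  proof -
    have "\<forall>(x', y')\<in>S. x \<noteq> x' \<and> x \<noteq> y' \<and> y \<noteq> x' \<and> y \<noteq> y'"
    proof
      fix p assume p: "p \<in> S"
      obtain x' y' where p': "p = (x', y')" by (cases p)
      have "(x, y) \<noteq> (x', y')" using p p' insert.hyps xy by auto
      with g p p' show "case p of (x', y') \<Rightarrow> x \<noteq> x' \<and> x \<noteq> y' \<and> y \<noteq> x' \<and> y \<noteq> y'"
        unfolding goodS_def by fastforce
    qed
    thus "x \<notin> Vs S" "y \<notin> Vs S" unfolding Vs_def by force+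
  qed
  have VH: "Vs S \<subseteq> H" using gS unfolding goodS_def Vs_def by force
  define T where "T = insert x (Vs S)"
  have TH: "T \<subseteq> H" using VH xyH by (auto simp: T_def)
  have cT: "card T \<le> 2 * card S + 1"
    using card_Vs[OF insert.hyps(1)] xV insert.hyps(1) by (simp add: T_def Vs_def)
  have A: "Abar (matchings H) S \<subseteq> matchings H" by (auto simp: Abar_def)
  have cl: "cnj a b m \<in> Abar (matchings H) S"
    if m: "m \<in> Abar (matchings H) S" and a: "a \<in> H - T" and b: "b \<in> H - T" for m a b
  proof -
    have mM: "m \<in> matchings H" using m by (simp add: Abar_def)
    have "\<forall>(x', y')\<in>S. cnj a b m x' = y'"
    proof
      fix p assume p: "p \<in> S"
      obtain x' y' where p': "p = (x', y')" by (cases p)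
      have "x' \<in> Vs S" "y' \<in> Vs S" using p p' unfolding Vs_def by force+
      hence "x' \<noteq> a" "x' \<noteq> b" "y' \<noteq> a" "y' \<noteq> b" using a b by (auto simp: T_def)
      moreover have "m x' = y'" using m p p' by (auto simp: Abar_def)
      ultimately show "case p of (x', y') \<Rightarrow> cnj a b m x' = y'" using p' by (simp add: cnj_def sw_def)
    qed
    thus ?thesis using cnj_matching[OF mM] a b by (simp add: Abar_def)
  qed
  have st: "card {m\<in>Abar (matchings H) S. m x = y} * card (H - T) \<le> card (Abar (matchings H) S)"
    by (rule step_card[OF H A TH]) (use xyH yV cl in \<open>auto simp: T_def\<close>)
  have eqA: "{m\<in>Abar (matchings H) S. m x = y} = Abar (matchings H) (insert xy S)"
    by (auto simp: Abar_def xy)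
  have "card (H - T) \<ge> card H - card T" using card_Diff_subset[OF finite_subset[OF TH H] TH] by simp
  hence cHT: "real (card (H - T)) \<ge> real (card H) - 5" using cT cS l by linarith
  have pos: "real (card H) - 5 \<ge> 0" using l by simp
  have "real (card (Abar (matchings H) (insert xy S))) * (real (card H) - 5) ^ card (insert xy S)
      = (real (card (Abar (matchings H) (insert xy S))) * (real (card H) - 5)) * (real (card H) - 5) ^ card S"
    using insert.hyps by simp
  also have "\<dots> \<le> (real (card (Abar (matchings H) (insert xy S))) * real (card (H - T))) * (real (card H) - 5) ^ card S"
    by (intro mult_right_mono mult_left_mono cHT) (use pos in auto)
  also have "\<dots> \<le> real (card (Abar (matchings H) S)) * (real (card H) - 5) ^ card S"
    using st eqA zero_le_power[OF pos, of "card S"] by (intro mult_right_mono) (simp_all add: of_nat_mult[symmetric] del: of_nat_mult)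
  also have "\<dots> \<le> real (card (matchings H))" by (rule IH)
  finally show ?case .
qed

lemma half_edges_Sigma: "half_edges n d = (SIGMA i:{..<n}. {..<deg_ext n d i})"
  by (auto simp: half_edges_def)

lemma finite_half_edges [simp]: "finite (half_edges n d)"
  by (simp add: half_edges_Sigma)

lemma card_half_edges: "card (half_edges n d) = (\<Sum>i<n. deg_ext n d i)"
  by (simp add: half_edges_Sigma card_SigmaI)

lemma even_card_half_edges: "even (card (half_edges n d))"
proof (cases n)
  case 0 thus ?thesis by (simp add: card_half_edges)
next
  case (Suc n')
  have "(\<Sum>i<n. deg_ext n d i) = (\<Sum>i<n. d i) + (\<Sum>i<n. (if i = 0 \<and> odd (\<Sum>j<n. d j) then 1 else 0))"
    by (simp add: deg_ext_def sum.distrib)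
  also have "(\<Sum>i<n. (if i = 0 \<and> odd (\<Sum>j<n. d j) then 1 else 0::nat)) = (if odd (\<Sum>j<n. d j) then 1 else 0)"
    using Suc by (simp add: sum.If_cases)
  finally show ?thesis by (simp add: card_half_edges)
qed

lemma matchings_half_edges_ne: "matchings (half_edges n d) \<noteq> {}"
  by (rule matchings_nonempty) (simp_all add: even_card_half_edges)

lemma finite_matchings_half_edges [simp]: "finite (matchings (half_edges n d))"
  by (simp add: finite_matchings)

lemma sum_le_card_half_edges: "(\<Sum>i<n. d i) \<le> card (half_edges n d)"
  unfolding card_half_edges by (intro sum_mono) (simp add: deg_ext_def)

lemma deg_ext_le: "deg_ext n d i \<le> d i + 1"
  by (simp add: deg_ext_def)

lemma ecm_edge_01: "ecm_edge n d m i j = 0 \<or> ecm_edge n d m i j = 1"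
  by (simp add: ecm_edge_def)

definition Sc :: "(nat \<times> nat) set \<Rightarrow> (nat \<times> nat \<Rightarrow> nat \<times> nat) \<Rightarrow> ((nat \<times> nat) \<times> (nat \<times> nat)) set" where
  "Sc E c = (\<lambda>(a, b). ((a, fst (c (a, b))), (b, snd (c (a, b))))) ` E"

lemma edges_cover:
  assumes m: "m \<in> matchings (half_edges n d)" and E: "\<forall>(a, b)\<in>E. ecm_edge n d m a b = 1"
  shows "\<exists>c\<in>PiE E (\<lambda>(a, b). {..<deg_ext n d a} \<times> {..<deg_ext n d b}).
           m \<in> Abar (matchings (half_edges n d)) (Sc E c)"
proof -
  have "\<forall>e\<in>E. \<exists>kl. kl \<in> (case e of (a, b) \<Rightarrow> {..<deg_ext n d a} \<times> {..<deg_ext n d b}) \<and>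
           m (fst e, fst kl) = (snd e, snd kl)"
  proof
    fix e assume e: "e \<in> E"
    obtain a b where ab: "e = (a, b)" by (cases e)
    have "ecm_edge n d m a b = 1" using E e ab by auto
    then obtain k l where "(a, k) \<in> half_edges n d" "(b, l) \<in> half_edges n d" "m (a, k) = (b, l)"
      unfolding ecm_edge_def by (auto split: if_splits)
    thus "\<exists>kl. kl \<in> (case e of (a, b) \<Rightarrow> {..<deg_ext n d a} \<times> {..<deg_ext n d b}) \<and>
           m (fst e, fst kl) = (snd e, snd kl)"
      by (intro exI[of _ "(k, l)"]) (auto simp: ab half_edges_def)
  qed
  then obtain f where f: "\<forall>e\<in>E. f e \<in> (case e of (a, b) \<Rightarrow> {..<deg_ext n d a} \<times> {..<deg_ext n d b}) \<and>
           m (fst e, fst (f e)) = (snd e, snd (f e))"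
    by metis
  define c where "c = restrict f E"
  have "c \<in> PiE E (\<lambda>(a, b). {..<deg_ext n d a} \<times> {..<deg_ext n d b})"
    using f by (auto simp: c_def)
  moreover have "m \<in> Abar (matchings (half_edges n d)) (Sc E c)"
    using f m by (auto simp: Abar_def Sc_def c_def)
  ultimately show ?thesis by blast
qed

lemma Sc_good:
  assumes Eab: "E \<subseteq> {(a, b). a < b \<and> b < n}"
    and c: "c \<in> PiE E (\<lambda>(a, b). {..<deg_ext n d a} \<times> {..<deg_ext n d b})"
    and m: "m \<in> Abar (matchings (half_edges n d)) (Sc E c)"
  shows "goodS (half_edges n d) (Sc E c)"
proof -
  let ?H = "half_edges n d"
  have mM: "m \<in> matchings ?H" using m by (simp add: Abar_def)
  have mem: "\<exists>a b k l. (a, b) \<in> E \<and> a < b \<and> b < n \<and> k < deg_ext n d a \<and> l < deg_ext n d b \<and>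
      p = ((a, k), (b, l)) \<and> m (a, k) = (b, l)" if "p \<in> Sc E c" for p
  proof -
    from that obtain a b where ab: "(a, b) \<in> E" "p = ((a, fst (c (a, b))), (b, snd (c (a, b))))"
      unfolding Sc_def by auto
    have "c (a, b) \<in> {..<deg_ext n d a} \<times> {..<deg_ext n d b}" using c ab by (auto simp: PiE_def Pi_def)
    moreover have "m (a, fst (c (a, b))) = (b, snd (c (a, b)))"
      using m ab that by (auto simp: Abar_def)
    moreover have "a < b" "b < n" using Eab ab(1) by auto
    ultimately show ?thesis using ab
      by (intro exI[of _ a] exI[of _ b] exI[of _ "fst (c (a, b))"] exI[of _ "snd (c (a, b))"]) auto
  qed
  have main: "x \<noteq> y \<and> x \<in> ?H \<and> y \<in> ?H \<and>
        (\<forall>(x', y')\<in>Sc E c. (x, y) \<noteq> (x', y') \<longrightarrow> x \<noteq> x' \<and> x \<noteq> y' \<and> y \<noteq> x' \<and> y \<noteq> y')"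
    if xy: "(x, y) \<in> Sc E c" for x y
  proof -
    obtain a b k l where 1: "(a, b) \<in> E" "a < b" "b < n" "k < deg_ext n d a" "l < deg_ext n d b"
      "(x, y) = ((a, k), (b, l))" "m (a, k) = (b, l)" using mem[OF xy] by blast
    have xH: "x \<in> ?H" and yH: "y \<in> ?H" using 1 by (auto simp: half_edges_def)
    have "x \<noteq> y" using 1 by auto
    moreover have "x \<noteq> x' \<and> x \<noteq> y' \<and> y \<noteq> x' \<and> y \<noteq> y'"
      if xy': "(x', y') \<in> Sc E c" and ne: "(x, y) \<noteq> (x', y')" for x' y'
    proof -
      obtain a' b' k' l' where 2: "(a', b') \<in> E" "a' < b'" "b' < n" "k' < deg_ext n d a'" "l' < deg_ext n d b'"
        "(x', y') = ((a', k'), (b', l'))" "m (a', k') = (b', l')" using mem[OF xy'] by blast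
      have x'H: "x' \<in> ?H" using 2 by (auto simp: half_edges_def)
      have inv: "m (m h) = h" if "h \<in> ?H" for h using matchingsD(3)[OF mM that] .
      have mx: "m x = y" "m x' = y'" using 1 2 by auto
      show "x \<noteq> x' \<and> x \<noteq> y' \<and> y \<noteq> x' \<and> y \<noteq> y'"
      proof (intro conjI notI)
        assume "x = x'" thus False using mx ne by auto
      next
        assume h: "x = y'"
        hence "m x = x'" using inv[OF x'H] mx by simp
        hence "y = x'" using mx by simp
        thus False using h 1 2 by auto
      next
        assume h: "y = x'"
        hence "y' = x" using inv[OF xH] mx by metis
        thus False using h 1 2 by auto
      next
        assume h: "y = y'"
        hence "x = x'" using inv[OF xH] inv[OF x'H] mx by metis
        thus False using h ne by auto
      qed
    qed
    ultimately show ?thesis using xH yH by blast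
  qed
  show ?thesis unfolding goodS_def using main by blast
qed

lemma card_Sc: "card (Sc E c) = card E"
  unfolding Sc_def
  by (rule card_image) (auto simp: inj_on_def)

lemma finite_Sc: "finite E \<Longrightarrow> finite (Sc E c)"
  by (simp add: Sc_def)

lemma prob_edges:
  assumes E: "finite E" "E \<subseteq> {(a, b). a < b \<and> b < n}" "card E \<le> 3"
    and l: "card (half_edges n d) \<ge> 6"
  shows "real (card {m \<in> matchings (half_edges n d). \<forall>(a, b)\<in>E. ecm_edge n d m a b = 1})
    \<le> real (card (matchings (half_edges n d))) *
       (\<Prod>(a, b)\<in>E. real (deg_ext n d a) * real (deg_ext n d b) / (real (card (half_edges n d)) - 5))"
proof -
  let ?H = "half_edges n d" and ?M = "matchings (half_edges n d)"
  let ?P = "PiE E (\<lambda>(a, b). {..<deg_ext n d a} \<times> {..<deg_ext n d b})"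
  let ?q = "real (card ?H) - 5"
  have qpos: "?q > 0" using l by simp
  have finP: "finite ?P" using E by (intro finite_PiE) auto
  have "{m \<in> ?M. \<forall>(a, b)\<in>E. ecm_edge n d m a b = 1} \<subseteq> (\<Union>c\<in>?P. Abar ?M (Sc E c))"
    using edges_cover by blast
  hence "card {m \<in> ?M. \<forall>(a, b)\<in>E. ecm_edge n d m a b = 1} \<le> card (\<Union>c\<in>?P. Abar ?M (Sc E c))"
    by (intro card_mono) (auto intro!: finite_UN_I finP simp: Abar_def)
  also have "\<dots> \<le> (\<Sum>c\<in>?P. card (Abar ?M (Sc E c)))"
    by (rule card_UN_le[OF finP])
  finally have 1: "real (card {m \<in> ?M. \<forall>(a, b)\<in>E. ecm_edge n d m a b = 1}) \<le> (\<Sum>c\<in>?P. real (card (Abar ?M (Sc E c))))"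
    by (simp flip: of_nat_sum)
  have 2: "real (card (Abar ?M (Sc E c))) \<le> real (card ?M) / ?q ^ card E" if c: "c \<in> ?P" for c
  proof (cases "Abar ?M (Sc E c) = {}")
    case True thus ?thesis using qpos by simp
  next
    case False
    then obtain m where "m \<in> Abar ?M (Sc E c)" by blast
    hence g: "goodS ?H (Sc E c)" using Sc_good[OF E(2) c] by blast
    have "real (card (Abar ?M (Sc E c))) * ?q ^ card (Sc E c) \<le> real (card ?M)"
      by (rule Abar_bound) (use g E l in \<open>simp_all add: finite_Sc card_Sc\<close>)
    thus ?thesis using qpos by (simp add: card_Sc field_simps)
  qed
  have "(\<Sum>c\<in>?P. real (card (Abar ?M (Sc E c)))) \<le> (\<Sum>c\<in>?P. real (card ?M) / ?q ^ card E)"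
    by (rule sum_mono) (rule 2)
  also have "\<dots> = real (card ?P) * real (card ?M) / ?q ^ card E" by simp
  also have "real (card ?P) = (\<Prod>(a, b)\<in>E. real (deg_ext n d a) * real (deg_ext n d b))"
    using E by (simp add: card_PiE case_prod_unfold)
  also have "(\<Prod>(a, b)\<in>E. real (deg_ext n d a) * real (deg_ext n d b)) * real (card ?M) / ?q ^ card E
      = real (card ?M) * (\<Prod>(a, b)\<in>E. real (deg_ext n d a) * real (deg_ext n d b) / ?q)"
    by (simp add: prod_dividef case_prod_unfold)
  finally show ?thesis using 1 by linarith
qed

lemma tri_bound:
  assumes ijk: "i < j" "j < k" "k < n" and l: "card (half_edges n d) \<ge> 6"
  shows "(\<Sum>m\<in>matchings (half_edges n d). ecm_edge n d m i j * ecm_edge n d m j k * ecm_edge n d m i k)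
           / real (card (matchings (half_edges n d)))
    \<le> min 1 (real (deg_ext n d i) * real (deg_ext n d j) / (real (card (half_edges n d)) - 5)) *
       min 1 (real (deg_ext n d j) * real (deg_ext n d k) / (real (card (half_edges n d)) - 5)) *
       min 1 (real (deg_ext n d i) * real (deg_ext n d k) / (real (card (half_edges n d)) - 5))"
proof -
  let ?M = "matchings (half_edges n d)"
  define f where "f = (\<lambda>(a, b). real (deg_ext n d a) * real (deg_ext n d b) / (real (card (half_edges n d)) - 5))"
  define X where "X = (\<lambda>m (a, b). ecm_edge n d m a b)"
  define E3 where "E3 = {(i, j), (j, k), (i, k)}"
  define E where "E = {e\<in>E3. f e \<le> 1}"
  have finE: "finite E" by (simp add: E_def E3_def)
  have E3sub: "E3 \<subseteq> {(a, b). a < b \<and> b < n}" using ijk by (auto simp: E3_def)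
  have cE3: "card E3 \<le> 3" by (simp add: E3_def card_insert_if)
  have "card E \<le> card E3" unfolding E_def by (rule card_mono) (auto simp: E3_def)
  hence cE: "card E \<le> 3" using cE3 by linarith
  have Esub: "E \<subseteq> {(a, b). a < b \<and> b < n}" using E3sub by (auto simp: E_def)
  have pw: "ecm_edge n d m i j * ecm_edge n d m j k * ecm_edge n d m i k
      \<le> (if \<forall>(a, b)\<in>E. ecm_edge n d m a b = 1 then 1 else 0)" for m
  proof (cases "ecm_edge n d m i j = 1 \<and> ecm_edge n d m j k = 1 \<and> ecm_edge n d m i k = 1")
    case True
    hence "\<forall>(a, b)\<in>E. ecm_edge n d m a b = 1" by (auto simp: E_def E3_def)
    thus ?thesis using True by simp
  next
    case False
    hence "ecm_edge n d m i j = 0 \<or> ecm_edge n d m j k = 0 \<or> ecm_edge n d m i k = 0"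
      using ecm_edge_01[of n d m i j] ecm_edge_01[of n d m j k] ecm_edge_01[of n d m i k] by auto
    hence "ecm_edge n d m i j * ecm_edge n d m j k * ecm_edge n d m i k = 0" by (elim disjE) simp_all
    moreover have "0 \<le> (if \<forall>(a, b)\<in>E. ecm_edge n d m a b = 1 then 1 else (0::real))" by simp
    ultimately show ?thesis by linarith
  qed
  have "(\<Sum>m\<in>?M. ecm_edge n d m i j * ecm_edge n d m j k * ecm_edge n d m i k)
      \<le> (\<Sum>m\<in>?M. (if \<forall>(a, b)\<in>E. ecm_edge n d m a b = 1 then 1 else 0))"
    by (rule sum_mono) (rule pw)
  also have "\<dots> = real (card (?M \<inter> {m. \<forall>(a, b)\<in>E. ecm_edge n d m a b = 1}))"
    by (simp add: sum.If_cases)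
  also have "\<dots> = real (card {m \<in> ?M. \<forall>(a, b)\<in>E. ecm_edge n d m a b = 1})"
    by (rule arg_cong[where f = "\<lambda>A. real (card A)"]) blast
  also have "\<dots> \<le> real (card ?M) * (\<Prod>(a, b)\<in>E. real (deg_ext n d a) * real (deg_ext n d b) / (real (card (half_edges n d)) - 5))"
    by (rule prob_edges[OF finE Esub cE l])
  also have "(\<Prod>(a, b)\<in>E. real (deg_ext n d a) * real (deg_ext n d b) / (real (card (half_edges n d)) - 5)) = prod f E"
    by (simp add: f_def)
  also have "prod f E = (\<Prod>e\<in>E3. if f e \<le> 1 then f e else 1)"
    unfolding E_def by (rule prod.inter_filter) (simp add: E3_def)
  also have "\<dots> = (\<Prod>e\<in>E3. min 1 (f e))"
    by (rule prod.cong) auto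
  also have "\<dots> = min 1 (f (i, j)) * min 1 (f (j, k)) * min 1 (f (i, k))"
    using ijk by (simp add: E3_def)
  finally have 1: "(\<Sum>m\<in>?M. ecm_edge n d m i j * ecm_edge n d m j k * ecm_edge n d m i k)
     \<le> real (card ?M) * (min 1 (f (i, j)) * min 1 (f (j, k)) * min 1 (f (i, k)))" by simp
  have "card ?M > 0" using matchings_half_edges_ne by (simp add: card_gt_0_iff)
  with 1 show ?thesis by (simp add: f_def field_simps)
qed

lemma dyadic_floor:
  fixes r :: real assumes "r \<ge> 1"
  shows "\<exists>k::nat. 2 ^ k \<le> r \<and> r < 2 ^ (k + 1)"
proof -
  obtain N :: nat where N: "r < 2 ^ N" using real_arch_pow[of 2 r] by auto
  have "\<forall>r::real. r \<ge> 1 \<longrightarrow> r < 2 ^ N \<longrightarrow> (\<exists>k::nat. 2 ^ k \<le> r \<and> r < 2 ^ (k + 1))"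
  proof (induction N)
    case 0 thus ?case by auto
  next
    case (Suc N)
    show ?case
    proof (intro allI impI)
      fix r :: real assume r: "r \<ge> 1" "r < 2 ^ Suc N"
      show "\<exists>k::nat. 2 ^ k \<le> r \<and> r < 2 ^ (k + 1)"
      proof (cases "r < 2 ^ N")
        case True thus ?thesis using Suc.IH r by blast
      next
        case False thus ?thesis using r by (intro exI[of _ N]) auto
      qed
    qed
  qed
  thus ?thesis using assms N by blast
qed

lemma dyadic_ceil:
  fixes r :: real assumes "r > 1"
  shows "\<exists>k::nat. 2 ^ k < r \<and> r \<le> 2 ^ (k + 1)"
proof -
  obtain N :: nat where N: "r < 2 ^ N" using real_arch_pow[of 2 r] by auto
  have "\<forall>r::real. r > 1 \<longrightarrow> r \<le> 2 ^ N \<longrightarrow> (\<exists>k::nat. 2 ^ k < r \<and> r \<le> 2 ^ (k + 1))"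
  proof (induction N)
    case 0 thus ?case by auto
  next
    case (Suc N)
    show ?case
    proof (intro allI impI)
      fix r :: real assume r: "r > 1" "r \<le> 2 ^ Suc N"
      show "\<exists>k::nat. 2 ^ k < r \<and> r \<le> 2 ^ (k + 1)"
      proof (cases "r \<le> 2 ^ N")
        case True thus ?thesis using Suc.IH r by blast
      next
        case False thus ?thesis using r by (intro exI[of _ N]) auto
      qed
    qed
  qed
  thus ?thesis using assms N by fastforce
qed

lemma pow2_powr: "((2::real) powr a) ^ k = (2 ^ k) powr a"
  by (simp add: powr_power powr_realpow[symmetric] powr_powr mult.commute)

locale lsetup =
  fixes p :: "nat pmf" and L :: "real \<Rightarrow> real" and \<gamma> \<mu> :: real
  assumes tail: "\<forall>t>0. measure_pmf.prob p {k. real k > t} = L t * t powr (- \<gamma>)"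
    and sv: "slowly_varying L"
    and gam1: "1 < \<gamma>" and gam2: "\<gamma> < 2"
    and mu: "\<mu> = measure_pmf.expectation p real"
begin

definition G :: "real \<Rightarrow> real" where
  "G t = measure_pmf.prob p {k. real k > t}"

definition dl :: real where
  "dl = min ((2 - \<gamma>) / 8) ((\<gamma> - 1) / 4)"

lemma dl_pos: "dl > 0"
  using gam1 gam2 by (simp add: dl_def)
lemma dl_le1: "dl \<le> (2 - \<gamma>) / 8"
  unfolding dl_def by (rule min.cobounded1)
lemma dl_le2: "dl \<le> (\<gamma> - 1) / 4"
  unfolding dl_def by (rule min.cobounded2)

lemma G_nonneg: "G t \<ge> 0" and G_le1: "G t \<le> 1"
  by (simp_all add: G_def)

lemma G_mono: "t \<le> t' \<Longrightarrow> G t' \<le> G t"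
  unfolding G_def by (rule measure_pmf.finite_measure_mono) auto

lemma L_eq: "t > 0 \<Longrightarrow> L t = G t * t powr \<gamma>"
  using tail by (simp add: G_def powr_minus field_simps)

definition x0P :: "real \<Rightarrow> bool" where
  "x0P x \<longleftrightarrow> x \<ge> 1 \<and> (\<forall>t\<ge>x. G t > 0 \<and> G (2 * t) \<le> 2 powr (dl - \<gamma>) * G t \<and> G t \<le> 2 powr (\<gamma> + dl) * G (2 * t))"

lemma ex_x0: "\<exists>x. x0P x"
proof -
  have lim: "((\<lambda>t. L (2 * t) / L t) \<longlongrightarrow> 1) at_top" using sv by (simp add: slowly_varying_def)
  have "2 powr (- dl) < 1" using dl_pos by (simp add: powr_less_one)
  hence ev1: "\<forall>\<^sub>F t in at_top. 2 powr (- dl) < L (2 * t) / L t" using order_tendstoD(1)[OF lim] by blast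
  have "1 < 2 powr dl" using dl_pos by simp
  hence ev2: "\<forall>\<^sub>F t in at_top. L (2 * t) / L t < 2 powr dl" using order_tendstoD(2)[OF lim] by blast
  obtain x where x: "\<And>t. t \<ge> x \<Longrightarrow> 2 powr (- dl) < L (2 * t) / L t \<and> L (2 * t) / L t < 2 powr dl"
    using eventually_conj[OF ev1 ev2] unfolding eventually_at_top_linorder by blast
  define x' where "x' = max x 1"
  have "x0P x'"
    unfolding x0P_def
  proof (intro conjI allI impI)
    show "x' \<ge> 1" by (simp add: x'_def)
    fix t assume t: "t \<ge> x'"
    hence t1: "t \<ge> 1" "t \<ge> x" by (auto simp: x'_def)
    have r: "2 powr (- dl) < L (2 * t) / L t" "L (2 * t) / L t < 2 powr dl" using x[OF t1(2)] by auto
    have Lt: "L t = G t * t powr \<gamma>" using t1 by (simp add: L_eq)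
    have L2t: "L (2 * t) = G (2 * t) * (2 powr \<gamma> * t powr \<gamma>)" using t1 by (simp add: L_eq powr_mult)
    have "L t \<noteq> 0" using r(1) by (auto simp: powr_def)
    hence Gt: "G t > 0" using Lt G_nonneg[of t] by (auto simp: less_le)
    show "G t > 0" by (fact Gt)
    have tg: "t powr \<gamma> > 0" using t1 by simp
    have Ltp: "L t > 0" using Lt Gt tg by simp
    have "L (2 * t) \<le> 2 powr dl * L t" using r(2) Ltp by (simp add: field_simps)
    hence "G (2 * t) * 2 powr \<gamma> * t powr \<gamma> \<le> 2 powr dl * G t * t powr \<gamma>"
      using Lt L2t by (simp add: mult_ac)
    hence "G (2 * t) * 2 powr \<gamma> \<le> 2 powr dl * G t" using tg by simp
    hence "G (2 * t) \<le> 2 powr dl * G t / 2 powr \<gamma>" by (simp add: field_simps)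
    thus "G (2 * t) \<le> 2 powr (dl - \<gamma>) * G t" by (simp add: powr_diff field_simps)
    have "2 powr (- dl) * L t \<le> L (2 * t)" using r(1) Ltp by (simp add: field_simps)
    hence "2 powr (- dl) * G t * t powr \<gamma> \<le> G (2 * t) * 2 powr \<gamma> * t powr \<gamma>"
      using Lt L2t by (simp add: mult_ac)
    hence "2 powr (- dl) * G t \<le> G (2 * t) * 2 powr \<gamma>" using tg by simp
    hence "G t \<le> G (2 * t) * 2 powr \<gamma> / 2 powr (- dl)" by (simp add: field_simps)
    thus "G t \<le> 2 powr (\<gamma> + dl) * G (2 * t)" by (simp add: powr_add powr_minus field_simps)
  qed
  thus ?thesis by blast
qed

definition x0 :: real where "x0 = (SOME x. x0P x)"

lemma x0: "x0P x0"
  unfolding x0_def using ex_x0 by (rule someI_ex)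

lemma x0_ge1: "x0 \<ge> 1" and G_pos_x0: "t \<ge> x0 \<Longrightarrow> G t > 0"
  and G_double1: "t \<ge> x0 \<Longrightarrow> G (2 * t) \<le> 2 powr (dl - \<gamma>) * G t"
  and G_double2: "t \<ge> x0 \<Longrightarrow> G t \<le> 2 powr (\<gamma> + dl) * G (2 * t)"
  using x0 by (auto simp: x0P_def)

lemma G_pos: "G t > 0"
proof -
  have "G (max t x0) > 0" by (rule G_pos_x0) simp
  moreover have "G (max t x0) \<le> G t" by (rule G_mono) simp
  ultimately show ?thesis by linarith
qed

lemma PD1: "t \<ge> x0 \<Longrightarrow> G (2 ^ k * t) \<le> (2 powr (dl - \<gamma>)) ^ k * G t"
proof (induction k)
  case 0 thus ?case by simp
next
  case (Suc k)
  have "2 ^ k * t \<ge> x0" using Suc.prems x0_ge1 by (smt (verit) mult_le_cancel_right1 one_le_power)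
  hence "G (2 * (2 ^ k * t)) \<le> 2 powr (dl - \<gamma>) * G (2 ^ k * t)" by (rule G_double1)
  also have "\<dots> \<le> 2 powr (dl - \<gamma>) * ((2 powr (dl - \<gamma>)) ^ k * G t)"
    by (intro mult_left_mono Suc.IH Suc.prems) simp
  finally show ?case by (simp add: mult_ac)
qed

lemma PD2: "t \<ge> x0 \<Longrightarrow> G t \<le> (2 powr (\<gamma> + dl)) ^ k * G (2 ^ k * t)"
proof (induction k)
  case 0 thus ?case by simp
next
  case (Suc k)
  have "2 ^ k * t \<ge> x0" using Suc.prems x0_ge1 by (smt (verit) mult_le_cancel_right1 one_le_power)
  hence "G (2 ^ k * t) \<le> 2 powr (\<gamma> + dl) * G (2 * (2 ^ k * t))" by (rule G_double2)
  hence "(2 powr (\<gamma> + dl)) ^ k * G (2 ^ k * t) \<le> (2 powr (\<gamma> + dl)) ^ k * (2 powr (\<gamma> + dl) * G (2 * (2 ^ k * t)))"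
    by (intro mult_left_mono) simp_all
  with Suc.IH[OF Suc.prems] have "G t \<le> (2 powr (\<gamma> + dl)) ^ k * (2 powr (\<gamma> + dl) * G (2 * (2 ^ k * t)))"
    by linarith
  thus ?case by (simp add: mult_ac)
qed

lemma PG1:
  assumes t: "t \<ge> x0" and l: "l \<ge> 1"
  shows "G (l * t) \<le> 2 powr \<gamma> * l powr (dl - \<gamma>) * G t"
proof -
  obtain k :: nat where k: "2 ^ k \<le> l" "l < 2 ^ (k + 1)" using dyadic_floor[OF l] by blast
  have tpos: "t > 0" using t x0_ge1 by simp
  have "G (l * t) \<le> G (2 ^ k * t)" by (rule G_mono) (use k tpos in simp)
  also have "\<dots> \<le> (2 powr (dl - \<gamma>)) ^ k * G t" by (rule PD1[OF t])
  also have "(2 powr (dl - \<gamma>)) ^ k = (2 ^ k) powr (dl - \<gamma>)" by (rule pow2_powr)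
  also have "(2 ^ k) powr (dl - \<gamma>) \<le> (l / 2) powr (dl - \<gamma>)"
    by (rule powr_mono2') (use k dl_le2 gam1 in auto)
  also have "(l / 2) powr (dl - \<gamma>) = l powr (dl - \<gamma>) * 2 powr (\<gamma> - dl)"
    using l by (simp add: powr_divide powr_diff field_simps)
  also have "\<dots> \<le> l powr (dl - \<gamma>) * 2 powr \<gamma>"
    by (intro mult_left_mono powr_mono) (use dl_pos in auto)
  finally show ?thesis using G_nonneg[of t] by (simp add: mult_ac mult_right_mono)
qed

lemma PG2:
  assumes t: "t \<ge> x0" and l: "l \<ge> 1"
  shows "G t \<le> (2 * l) powr (\<gamma> + dl) * G (l * t)"
proof -
  obtain k :: nat where k: "2 ^ k \<le> l" "l < 2 ^ (k + 1)" using dyadic_floor[OF l] by blast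
  have tpos: "t > 0" using t x0_ge1 by simp
  have "G t \<le> (2 powr (\<gamma> + dl)) ^ (k + 1) * G (2 ^ (k + 1) * t)" by (rule PD2[OF t])
  also have "(2 powr (\<gamma> + dl)) ^ (k + 1) = (2 ^ (k + 1)) powr (\<gamma> + dl)" by (rule pow2_powr)
  also have "G (2 ^ (k + 1) * t) \<le> G (l * t)" by (rule G_mono) (use k tpos in simp)
  also have "(2 ^ (k + 1)) powr (\<gamma> + dl) \<le> (2 * l) powr (\<gamma> + dl)"
    by (rule powr_mono2) (use k dl_pos gam1 in auto)
  finally show ?thesis using G_nonneg by (simp add: mult_right_mono)
qed

end

lemma int_bdd: fixes f :: "'a \<Rightarrow> real" shows "(\<And>d. \<bar>f d\<bar> \<le> B) \<Longrightarrow> integrable (measure_pmf q) f"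
  by (intro measure_pmf.integrable_const_bound[where B=B]) auto

lemma exp_ind: "measure_pmf.expectation q (\<lambda>d. c * indicator A d) = c * measure_pmf.prob q A"
  by (simp add: integral_indicator)

lemma exp_sum_ind:
  "measure_pmf.expectation q (\<lambda>d. \<Sum>j<J. c j * indicator (A j) d) = (\<Sum>j<J. c j * measure_pmf.prob q (A j))"
proof -
  have "measure_pmf.expectation q (\<lambda>d. \<Sum>j<J. c j * indicator (A j) d) =
        (\<Sum>j<J. measure_pmf.expectation q (\<lambda>d. c j * indicator (A j) d))"
  proof (rule Bochner_Integration.integral_sum)
    fix j show "integrable q (\<lambda>d. c j * indicator (A j) d)"
      by (rule int_bdd[where B="\<bar>c j\<bar>"]) (simp add: indicator_def)
  qed
  also have "\<dots> = (\<Sum>j<J. c j * measure_pmf.prob q (A j))" by (simp add: exp_ind)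
  finally show ?thesis .
qed

lemma trunc_integrable:
  fixes f :: "nat \<Rightarrow> real" and q :: "nat pmf"
  assumes nn: "\<And>d. f d \<ge> 0" and B: "\<And>N. measure_pmf.expectation q (\<lambda>d. f d * indicator {..N} d) \<le> B"
  shows "integrable q f \<and> measure_pmf.expectation q f \<le> B"
proof -
  define g where "g = (\<lambda>N d. ennreal (f d * indicator {..N} d))"
  have inc: "incseq g"
    by (auto simp: incseq_def le_fun_def g_def indicator_def nn intro!: ennreal_leI)
  have sup: "(SUP N. g N d) = ennreal (f d)" for d
  proof (rule antisym)
    show "(SUP N. g N d) \<le> ennreal (f d)"
      by (rule SUP_least) (auto simp: g_def indicator_def nn intro!: ennreal_leI)
    have "g d d = ennreal (f d)" by (simp add: g_def)
    thus "ennreal (f d) \<le> (SUP N. g N d)" by (metis SUP_upper UNIV_I)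
  qed
  have intN: "integrable q (\<lambda>d. f d * indicator {..N} d)" for N
    by (rule int_bdd[where B="\<Sum>k\<le>N. f k"]) (auto simp: indicator_def nn intro!: member_le_sum sum_nonneg)
  have gN: "integral\<^sup>N q (g N) \<le> ennreal B" for N
  proof -
    have "integral\<^sup>N q (g N) = ennreal (measure_pmf.expectation q (\<lambda>d. f d * indicator {..N} d))"
      unfolding g_def by (rule nn_integral_eq_integral[OF intN]) (auto simp: nn)
    also have "\<dots> \<le> ennreal B" by (rule ennreal_leI[OF B])
    finally show ?thesis .
  qed
  have "(\<integral>\<^sup>+ d. ennreal (f d) \<partial>q) = (\<integral>\<^sup>+ d. (SUP N. g N d) \<partial>q)" by (simp add: sup)
  also have "\<dots> = (SUP N. integral\<^sup>N q (g N))"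
    by (rule nn_integral_monotone_convergence_SUP[OF inc]) simp
  also have "\<dots> \<le> ennreal B" by (rule SUP_least) (rule gN)
  finally have le: "(\<integral>\<^sup>+ d. ennreal (f d) \<partial>q) \<le> ennreal B" .
  have int: "integrable q f"
    by (rule integrableI_bounded) (use le nn in \<open>auto simp: top.not_eq_extremum intro: le_less_trans\<close>)
  have "ennreal (measure_pmf.expectation q f) = (\<integral>\<^sup>+ d. ennreal (f d) \<partial>q)"
    by (rule nn_integral_eq_integral[symmetric, OF int]) (simp add: nn)
  with le have "ennreal (measure_pmf.expectation q f) \<le> ennreal B" by simp
  moreover have "B \<ge> 0" using B[of 0] Bochner_Integration.integral_nonneg[of q "\<lambda>d. f d * indicator {..0} d"] nn
    by (smt (verit) indicator_pos_le mult_nonneg_nonneg)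
  ultimately have "measure_pmf.expectation q f \<le> B" by (simp add: ennreal_le_iff)
  with int show ?thesis by blast
qed

lemma abs_sum_ind_le:
  fixes c :: "nat \<Rightarrow> real"
  assumes "\<And>j. c j \<ge> 0" shows "\<bar>\<Sum>j<J. c j * indicator (A j) d\<bar> \<le> (\<Sum>j<J. c j)"
proof -
  have "0 \<le> (\<Sum>j<J. c j * indicator (A j) d)" using assms by (intro sum_nonneg) simp
  moreover have "(\<Sum>j<J. c j * indicator (A j) d) \<le> (\<Sum>j<J. c j)"
    using assms by (intro sum_mono) (simp add: indicator_def)
  ultimately show ?thesis by simp
qed

lemma geom_sum_le: fixes r :: real assumes "0 \<le> r" "r < 1" shows "(\<Sum>j<J. r ^ j) \<le> 1 / (1 - r)"
proof -
  have "(\<Sum>j<J. r ^ j) = (1 - r ^ J) / (1 - r)" using assms by (simp add: sum_gp_strict)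
  also have "\<dots> \<le> 1 / (1 - r)" using assms by (intro divide_right_mono) auto
  finally show ?thesis .
qed

context lsetup
begin

definition rr :: real where "rr = 2 powr (- dl)"

lemma rr: "0 < rr" "rr < 1"
  using dl_pos by (auto simp: rr_def powr_less_one)

lemma M2_trunc:
  assumes q: "0 \<le> q" "q \<le> \<gamma> - 2 * dl" and y: "y \<ge> x0"
  shows "measure_pmf.expectation p (\<lambda>d. (real d powr q * indicator {k. real k > y} d) * indicator {..N} d)
           \<le> 4 / (1 - rr) * (y powr q * G y)"
proof -
  have ypos: "y > 0" using y x0_ge1 by simp
  obtain J :: nat where J: "real N < y * 2 ^ J"
    using real_arch_pow[of 2 "real N / y"] ypos by (auto simp: field_simps)
  define c where "c = (\<lambda>j::nat. (y * 2 ^ (j + 1)) powr q)"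
  define A where "A = (\<lambda>j::nat. {k::nat. real k > y * 2 ^ j})"
  have pw: "(real d powr q * indicator {k. real k > y} d) * indicator {..N} d \<le> (\<Sum>j<J. c j * indicator (A j) d)" for d
  proof (cases "real d > y \<and> d \<le> N")
    case True
    hence r: "real d / y > 1" using ypos by (simp add: field_simps)
    obtain j :: nat where j: "2 ^ j < real d / y" "real d / y \<le> 2 ^ (j + 1)" using dyadic_ceil[OF r] by blast
    have jd: "y * 2 ^ j < real d" "real d \<le> y * 2 ^ (j + 1)" using j ypos by (auto simp: field_simps)
    have "y * 2 ^ j < y * 2 ^ J" using jd True J by linarith
    hence jJ: "j < J" using ypos by simp
    have "real d powr q \<le> c j" unfolding c_def by (rule powr_mono2) (use jd q in auto)
    also have "c j = c j * indicator (A j) d" using jd by (simp add: A_def)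
    also have "\<dots> \<le> (\<Sum>j<J. c j * indicator (A j) d)"
      by (rule member_le_sum[where f = "\<lambda>j. c j * indicator (A j) d"]) (use jJ in \<open>auto simp: c_def\<close>)
    finally show ?thesis using True by simp
  next
    case False
    hence "(real d powr q * indicator {k. real k > y} d) * indicator {..N} d = 0" by (auto simp: indicator_def)
    moreover have "0 \<le> (\<Sum>j<J. c j * indicator (A j) d)" by (intro sum_nonneg) (simp add: c_def)
    ultimately show ?thesis by linarith
  qed
  have "measure_pmf.expectation p (\<lambda>d. (real d powr q * indicator {k. real k > y} d) * indicator {..N} d)
      \<le> measure_pmf.expectation p (\<lambda>d. \<Sum>j<J. c j * indicator (A j) d)"
  proof (rule integral_mono)
    show "integrable p (\<lambda>d. (real d powr q * indicator {k. real k > y} d) * indicator {..N} d)"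
      by (rule int_bdd[where B = "real N powr q"]) (auto simp: indicator_def intro!: powr_mono2 q)
    show "integrable p (\<lambda>d. \<Sum>j<J. c j * indicator (A j) d)"
      by (rule int_bdd[where B = "\<Sum>j<J. c j"], rule abs_sum_ind_le) (simp add: c_def)
  qed (rule pw)
  also have "\<dots> = (\<Sum>j<J. c j * G (y * 2 ^ j))" unfolding exp_sum_ind by (simp add: A_def G_def)
  also have "\<dots> \<le> (\<Sum>j<J. (2 powr q * y powr q * G y) * (2 powr (q + dl - \<gamma>)) ^ j)"
  proof (rule sum_mono)
    fix j assume "j \<in> {..<J}"
    have "G (y * 2 ^ j) = G (2 ^ j * y)" by (simp add: mult.commute)
    also have "\<dots> \<le> (2 powr (dl - \<gamma>)) ^ j * G y" by (rule PD1[OF y])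
    finally have g: "G (y * 2 ^ j) \<le> (2 powr (dl - \<gamma>)) ^ j * G y" .
    have cj: "c j = y powr q * 2 powr q * (2 powr q) ^ j"
      using ypos by (simp add: c_def powr_mult pow2_powr[symmetric] mult_ac)
    have "c j * G (y * 2 ^ j) \<le> c j * ((2 powr (dl - \<gamma>)) ^ j * G y)"
      by (intro mult_left_mono g) (simp add: c_def)
    also have "\<dots> = y powr q * 2 powr q * (2 powr q) ^ j * ((2 powr (dl - \<gamma>)) ^ j * G y)"
      by (simp only: cj)
    also have "\<dots> = (2 powr q * y powr q * G y) * (2 powr q * 2 powr (dl - \<gamma>)) ^ j"
      by (simp add: power_mult_distrib mult_ac)
    also have "2 powr q * 2 powr (dl - \<gamma>) = 2 powr (q + dl - \<gamma>)" by (simp add: powr_add[symmetric] algebra_simps)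
    finally show "c j * G (y * 2 ^ j) \<le> (2 powr q * y powr q * G y) * (2 powr (q + dl - \<gamma>)) ^ j" .
  qed
  also have "\<dots> = (2 powr q * y powr q * G y) * (\<Sum>j<J. (2 powr (q + dl - \<gamma>)) ^ j)"
    by (simp add: sum_distrib_left)
  also have "\<dots> \<le> (4 * y powr q * G y) * (\<Sum>j<J. rr ^ j)"
  proof (rule mult_mono)
    have "2 powr q \<le> 2 powr 2" by (rule powr_mono) (use q gam2 dl_pos in auto)
    hence h4: "2 powr q \<le> 4" by simp
    have "0 \<le> y powr q * G y" by (simp add: G_nonneg)
    from mult_right_mono[OF h4 this] show "2 powr q * y powr q * G y \<le> 4 * y powr q * G y" by (simp add: mult.assoc)
    have "2 powr (q + dl - \<gamma>) \<le> rr" unfolding rr_def by (rule powr_mono) (use q in auto)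
    thus "(\<Sum>j<J. (2 powr (q + dl - \<gamma>)) ^ j) \<le> (\<Sum>j<J. rr ^ j)"
      by (intro sum_mono power_mono) auto
    show "0 \<le> 4 * y powr q * G y" by (simp add: G_nonneg)
    show "0 \<le> (\<Sum>j<J. (2 powr (q + dl - \<gamma>)) ^ j)" by (intro sum_nonneg) simp
  qed
  also have "\<dots> \<le> (4 * y powr q * G y) * (1 / (1 - rr))"
    by (intro mult_left_mono geom_sum_le) (use rr G_nonneg[of y] in auto)
  finally show ?thesis by simp
qed

lemma M2:
  assumes q: "0 \<le> q" "q \<le> \<gamma> - 2 * dl" and y: "y \<ge> x0"
  shows "integrable p (\<lambda>d. real d powr q * indicator {k. real k > y} d) \<and>
         measure_pmf.expectation p (\<lambda>d. real d powr q * indicator {k. real k > y} d) \<le> 4 / (1 - rr) * (y powr q * G y)"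
proof (rule trunc_integrable)
  fix d show "0 \<le> real d powr q * indicator {k. real k > y} d" by simp
next
  fix N show "measure_pmf.expectation p (\<lambda>d. (real d powr q * indicator {k. real k > y} d) * indicator {..N} d)
           \<le> 4 / (1 - rr) * (y powr q * G y)" by (rule M2_trunc[OF q y])
qed

end

context lsetup
begin

definition cL :: real where "cL = G x0 * (x0 / 2) powr (\<gamma> + dl)"

lemma cL_pos: "cL > 0"
  using x0_ge1 G_pos by (simp add: cL_def)

lemma LB: assumes y: "y \<ge> x0" shows "G y \<ge> cL * y powr (- (\<gamma> + dl))"
proof -
  have ypos: "y > 0" using y x0_ge1 by simp
  have "G x0 \<le> (2 * (y / x0)) powr (\<gamma> + dl) * G (y / x0 * x0)"
    by (rule PG2) (use y x0_ge1 in auto)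
  also have "y / x0 * x0 = y" using x0_ge1 by simp
  also have "(2 * (y / x0)) powr (\<gamma> + dl) = y powr (\<gamma> + dl) / (x0 / 2) powr (\<gamma> + dl)"
    using ypos x0_ge1 by (simp add: powr_mult powr_divide field_simps)
  finally have "G x0 \<le> y powr (\<gamma> + dl) / (x0 / 2) powr (\<gamma> + dl) * G y" .
  hence "G x0 * (x0 / 2) powr (\<gamma> + dl) \<le> y powr (\<gamma> + dl) * G y"
    using x0_ge1 by (simp add: field_simps)
  hence "cL \<le> y powr (\<gamma> + dl) * G y" by (simp add: cL_def)
  hence "cL * y powr (- (\<gamma> + dl)) \<le> y powr (\<gamma> + dl) * G y * y powr (- (\<gamma> + dl))"
    by (intro mult_right_mono) auto
  also have "\<dots> = G y * (y powr (\<gamma> + dl) * y powr (- (\<gamma> + dl)))" by (simp add: mult_ac)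
  also have "y powr (\<gamma> + dl) * y powr (- (\<gamma> + dl)) = 1" using ypos by (simp add: powr_add[symmetric])
  finally show ?thesis by simp
qed

lemma M1_pw:
  assumes q: "0 < q" and y: "y \<ge> 2 * x0" and J: "2 ^ J \<le> y / x0" "y / x0 < 2 ^ (J + 1)"
    and d: "d \<ge> 0" "d \<le> y"
  shows "d powr q \<le> (2 * x0) powr q + (\<Sum>j<J. (y / 2 ^ j) powr q * indicator {t. t > y / 2 ^ (j + 1)} d)"
proof -
  have ypos: "y > 0" using y x0_ge1 by simp
  have S0: "0 \<le> (\<Sum>j<J. (y / 2 ^ j) powr q * indicator {t. t > y / 2 ^ (j + 1)} d)"
    by (intro sum_nonneg) simp
  show ?thesis
  proof (cases "d \<le> 2 * x0")
    case True
    hence "d powr q \<le> (2 * x0) powr q" by (intro powr_mono2) (use q d in auto)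
    thus ?thesis using S0 by linarith
  next
    case False
    hence dpos: "d > 0" using x0_ge1 by simp
    have r: "y / d \<ge> 1" using d dpos by simp
    obtain j :: nat where j: "2 ^ j \<le> y / d" "y / d < 2 ^ (j + 1)" using dyadic_floor[OF r] by blast
    have jd: "y / 2 ^ (j + 1) < d" "d \<le> y / 2 ^ j" using j dpos by (auto simp: field_simps)
    have "y / d < y / (2 * x0)" using False ypos dpos x0_ge1 by (intro divide_strict_left_mono) auto
    also have "\<dots> < 2 ^ (J + 1) / 2" using J(2) by (simp add: field_simps)
    finally have "y / d < 2 ^ J" by simp
    hence "(2::real) ^ j < 2 ^ J" using j(1) by linarith
    hence jJ: "j < J" by (simp add: power_strict_increasing_iff)
    have "d powr q \<le> (y / 2 ^ j) powr q" by (rule powr_mono2) (use q d jd in auto)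
    also have "\<dots> = (y / 2 ^ j) powr q * indicator {t. t > y / 2 ^ (j + 1)} d" using jd by simp
    also have "\<dots> \<le> (\<Sum>j<J. (y / 2 ^ j) powr q * indicator {t. t > y / 2 ^ (j + 1)} d)"
      by (rule member_le_sum[where f = "\<lambda>j. (y / 2 ^ j) powr q * indicator {t. t > y / 2 ^ (j + 1)} d"])
         (use jJ in auto)
    finally show ?thesis using q by (smt (verit) powr_ge_zero)
  qed
qed

lemma M1_pre:
  assumes q: "\<gamma> + 2 * dl \<le> q" "q \<le> 2" and y: "y \<ge> 2 * x0"
  shows "measure_pmf.expectation p (\<lambda>d. real d powr q * indicator {k. real k \<le> y} d)
     \<le> (2 * x0) powr q + 8 / (1 - rr) * (y powr q * G y)"
proof -
  have qpos: "q > 0" using q gam1 dl_pos by simp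
  have ypos: "y > 0" using y x0_ge1 by simp
  have r: "y / x0 \<ge> 1" using y x0_ge1 by simp
  obtain J :: nat where J: "2 ^ J \<le> y / x0" "y / x0 < 2 ^ (J + 1)" using dyadic_floor[OF r] by blast
  define c where "c = (\<lambda>j::nat. (y / 2 ^ j) powr q)"
  define A where "A = (\<lambda>j::nat. {k::nat. real k > y / 2 ^ (j + 1)})"
  have pw: "real d powr q * indicator {k. real k \<le> y} d \<le> (2 * x0) powr q + (\<Sum>j<J. c j * indicator (A j) d)" for d
  proof (cases "real d \<le> y")
    case True
    have "real d powr q \<le> (2 * x0) powr q + (\<Sum>j<J. (y / 2 ^ j) powr q * indicator {t. t > y / 2 ^ (j + 1)} (real d))"
      by (rule M1_pw[OF qpos y J]) (use True in auto)
    also have "(\<Sum>j<J. (y / 2 ^ j) powr q * indicator {t. t > y / 2 ^ (j + 1)} (real d)) = (\<Sum>j<J. c j * indicator (A j) d)"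
      by (simp add: c_def A_def indicator_def)
    finally show ?thesis using True by simp
  next
    case False
    have "0 \<le> (\<Sum>j<J. c j * indicator (A j) d)" by (intro sum_nonneg) (simp add: c_def)
    thus ?thesis using False by simp
  qed
  have "measure_pmf.expectation p (\<lambda>d. real d powr q * indicator {k. real k \<le> y} d)
      \<le> measure_pmf.expectation p (\<lambda>d. (2 * x0) powr q + (\<Sum>j<J. c j * indicator (A j) d))"
  proof (rule integral_mono)
    show "integrable p (\<lambda>d. real d powr q * indicator {k. real k \<le> y} d)"
    proof (rule int_bdd[where B = "y powr q"])
      fix d
      show "\<bar>real d powr q * indicator {k. real k \<le> y} d\<bar> \<le> y powr q"
      proof (cases "real d \<le> y")
        case True
        have "real d powr q \<le> y powr q" by (rule powr_mono2) (use True qpos in auto)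
        thus ?thesis using True by simp
      qed simp
    qed
    show "integrable p (\<lambda>d. (2 * x0) powr q + (\<Sum>j<J. c j * indicator (A j) d))"
    proof (rule Bochner_Integration.integrable_add)
      show "integrable p (\<lambda>d. \<Sum>j<J. c j * indicator (A j) d)"
        by (rule int_bdd[where B = "\<Sum>j<J. c j"], rule abs_sum_ind_le) (simp add: c_def)
    qed simp
  qed (rule pw)
  also have "\<dots> = (2 * x0) powr q + measure_pmf.expectation p (\<lambda>d. \<Sum>j<J. c j * indicator (A j) d)"
  proof (subst Bochner_Integration.integral_add)
    show "integrable p (\<lambda>d. \<Sum>j<J. c j * indicator (A j) d)"
      by (rule int_bdd[where B = "\<Sum>j<J. c j"], rule abs_sum_ind_le) (simp add: c_def)
  qed simp_all
  also have "measure_pmf.expectation p (\<lambda>d. \<Sum>j<J. c j * indicator (A j) d) = (\<Sum>j<J. c j * G (y / 2 ^ (j + 1)))"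
    unfolding exp_sum_ind by (simp add: A_def G_def)
  also have "\<dots> \<le> (\<Sum>j<J. (8 * y powr q * G y) * rr ^ j)"
  proof (rule sum_mono)
    fix j assume jJ: "j \<in> {..<J}"
    have "(2::real) ^ (j + 1) \<le> 2 ^ J" using jJ by (intro power_increasing) auto
    hence "x0 * 2 ^ (j + 1) \<le> x0 * 2 ^ J" using x0_ge1 by (intro mult_left_mono) auto
    also have "x0 * 2 ^ J \<le> y" using J(1) x0_ge1 by (simp add: field_simps)
    finally have tx: "y / 2 ^ (j + 1) \<ge> x0" by (simp add: field_simps)
    have "G (y / 2 ^ (j + 1)) \<le> (2 powr (\<gamma> + dl)) ^ (j + 1) * G (2 ^ (j + 1) * (y / 2 ^ (j + 1)))"
      by (rule PD2[OF tx])
    hence g: "G (y / 2 ^ (j + 1)) \<le> (2 powr (\<gamma> + dl)) ^ (j + 1) * G y" by simp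
    have cj: "c j = y powr q / (2 powr q) ^ j"
      using ypos by (simp add: c_def powr_divide pow2_powr)
    have "c j * G (y / 2 ^ (j + 1)) \<le> c j * ((2 powr (\<gamma> + dl)) ^ (j + 1) * G y)"
      by (intro mult_left_mono g) (simp add: c_def)
    also have "\<dots> = y powr q / (2 powr q) ^ j * ((2 powr (\<gamma> + dl)) ^ (j + 1) * G y)"
      by (simp only: cj)
    also have "\<dots> = (2 powr (\<gamma> + dl) * y powr q * G y) * (2 powr (\<gamma> + dl) / 2 powr q) ^ j"
      by (simp add: power_divide field_simps)
    also have "2 powr (\<gamma> + dl) / 2 powr q = 2 powr (\<gamma> + dl - q)" by (simp add: powr_diff)
    also have "(2 powr (\<gamma> + dl) * y powr q * G y) * (2 powr (\<gamma> + dl - q)) ^ j \<le> (8 * y powr q * G y) * rr ^ j"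
    proof (rule mult_mono)
      have "2 powr (\<gamma> + dl) \<le> 2 powr 3" by (rule powr_mono) (use gam2 dl_le1 gam1 in auto)
      hence h8: "2 powr (\<gamma> + dl) \<le> 8" by simp
      have "0 \<le> y powr q * G y" by (simp add: G_nonneg)
      from mult_right_mono[OF h8 this] show "2 powr (\<gamma> + dl) * y powr q * G y \<le> 8 * y powr q * G y"
        by (simp add: mult.assoc)
      have "2 powr (\<gamma> + dl - q) \<le> rr" unfolding rr_def by (rule powr_mono) (use q in auto)
      thus "(2 powr (\<gamma> + dl - q)) ^ j \<le> rr ^ j" by (intro power_mono) auto
      show "0 \<le> 8 * y powr q * G y" by (simp add: G_nonneg)
    qed simp
    finally show "c j * G (y / 2 ^ (j + 1)) \<le> (8 * y powr q * G y) * rr ^ j" .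
  qed
  also have "\<dots> = (8 * y powr q * G y) * (\<Sum>j<J. rr ^ j)" by (simp add: sum_distrib_left)
  also have "\<dots> \<le> (8 * y powr q * G y) * (1 / (1 - rr))"
    by (intro mult_left_mono geom_sum_le) (use rr G_nonneg[of y] in auto)
  finally show ?thesis by simp
qed

end

lemma plus1_powr_le:
  fixes d q :: real assumes d: "0 \<le> d" and q: "0 < q" "q \<le> 2"
  shows "(d + 1) powr q \<le> 4 * d powr q + 4"
proof (cases "d \<ge> 1")
  case True
  have "(d + 1) powr q \<le> (2 * d) powr q" by (rule powr_mono2) (use True q in auto)
  also have "\<dots> = 2 powr q * d powr q" using True by (simp add: powr_mult)
  also have "2 powr q \<le> 2 powr 2" by (rule powr_mono) (use q in auto)
  hence "2 powr q * d powr q \<le> 4 * d powr q" by (intro mult_right_mono) auto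
  finally show ?thesis by simp
next
  case False
  have "(d + 1) powr q \<le> 2 powr q" by (rule powr_mono2) (use False q d in auto)
  also have "\<dots> \<le> 2 powr 2" by (rule powr_mono) (use q in auto)
  finally have "(d + 1) powr q \<le> 4" by simp
  thus ?thesis using powr_ge_zero[of d q] by linarith
qed

context lsetup
begin

definition K0 :: real where "K0 = 4 + 4 * (2 * x0) powr 2"
definition y1 :: real where "y1 = max (2 * x0) ((K0 / cL) powr (1 / dl))"
definition C1 :: real where "C1 = 1 + 32 / (1 - rr)"
definition C2 :: real where "C2 = 4 / (1 - rr)"

lemma y1_ge: "y1 \<ge> 2 * x0" "y1 \<ge> x0" "y1 \<ge> 1"
  using x0_ge1 by (auto simp: y1_def)

lemma C_pos: "C1 > 0" "C2 > 0"
proof -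
  have r: "1 - rr > 0" using rr by simp
  show "C1 > 0" using r unfolding C1_def by (simp add: add_pos_nonneg)
  show "C2 > 0" using r unfolding C2_def by simp
qed

lemma K0_le:
  assumes y: "y \<ge> y1" and q: "\<gamma> + 2 * dl \<le> q"
  shows "K0 \<le> y powr q * G y"
proof -
  have y1': "y \<ge> 1" "y \<ge> x0" using y y1_ge by auto
  have K0pos: "K0 > 0" unfolding K0_def using powr_ge_zero[of "2 * x0" 2] by linarith
  have "K0 / cL = ((K0 / cL) powr (1 / dl)) powr dl"
    using K0pos cL_pos dl_pos by (simp add: powr_powr)
  also have "\<dots> \<le> y powr dl"
    by (rule powr_mono2) (use dl_pos y in \<open>auto simp: y1_def\<close>)
  finally have "K0 \<le> cL * y powr dl" using cL_pos by (simp add: field_simps)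
  also have "cL * y powr dl = cL * y powr (- (\<gamma> + dl)) * y powr (\<gamma> + 2 * dl)"
    using y1' by (simp add: mult.assoc powr_add[symmetric])
  also have "\<dots> \<le> G y * y powr q"
    by (intro mult_mono LB y1' powr_mono q) (use y1' G_nonneg[of y] in auto)
  finally show ?thesis by (simp add: mult.commute)
qed

lemma M1:
  assumes q: "\<gamma> + 2 * dl \<le> q" "q \<le> 2" and y: "y \<ge> y1"
  shows "measure_pmf.expectation p (\<lambda>d. (real d + 1) powr q * indicator {k. real k \<le> y} d)
     \<le> C1 * (y powr q * G y)"
proof -
  have qpos: "q > 0" using q gam1 dl_pos by simp
  have y2: "y \<ge> 2 * x0" using y y1_ge by auto
  have int1: "integrable p (\<lambda>d. real d powr q * indicator {k. real k \<le> y} d)"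
  proof (rule int_bdd[where B = "y powr q"])
    fix d
    show "\<bar>real d powr q * indicator {k. real k \<le> y} d\<bar> \<le> y powr q"
    proof (cases "real d \<le> y")
      case True
      have "real d powr q \<le> y powr q" by (rule powr_mono2) (use True qpos in auto)
      thus ?thesis using True by simp
    qed simp
  qed
  have "measure_pmf.expectation p (\<lambda>d. (real d + 1) powr q * indicator {k. real k \<le> y} d)
      \<le> measure_pmf.expectation p (\<lambda>d. 4 * (real d powr q * indicator {k. real k \<le> y} d) + 4)"
  proof (rule integral_mono)
    show "integrable p (\<lambda>d. (real d + 1) powr q * indicator {k. real k \<le> y} d)"
    proof (rule int_bdd[where B = "(y + 1) powr q"])
      fix d
      show "\<bar>(real d + 1) powr q * indicator {k. real k \<le> y} d\<bar> \<le> (y + 1) powr q"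
      proof (cases "real d \<le> y")
        case True
        have "(real d + 1) powr q \<le> (y + 1) powr q" by (rule powr_mono2) (use True qpos in auto)
        thus ?thesis using True by simp
      qed simp
    qed
    show "integrable p (\<lambda>d. 4 * (real d powr q * indicator {k. real k \<le> y} d) + 4)"
      using int1 by simp
    fix d
    show "(real d + 1) powr q * indicator {k. real k \<le> y} d \<le> 4 * (real d powr q * indicator {k. real k \<le> y} d) + 4"
      using plus1_powr_le[of "real d" q] qpos q by (auto simp: indicator_def)
  qed
  also have "\<dots> = 4 * measure_pmf.expectation p (\<lambda>d. real d powr q * indicator {k. real k \<le> y} d) + 4"
    using int1 by simp
  also have "\<dots> \<le> 4 * ((2 * x0) powr q + 8 / (1 - rr) * (y powr q * G y)) + 4"
    using M1_pre[OF q y2] by simp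
  also have "(2 * x0) powr q \<le> (2 * x0) powr 2" by (rule powr_mono) (use q x0_ge1 in auto)
  hence "4 * ((2 * x0) powr q + 8 / (1 - rr) * (y powr q * G y)) + 4 \<le> K0 + 32 / (1 - rr) * (y powr q * G y)"
    by (simp add: K0_def)
  also have "K0 \<le> y powr q * G y" by (rule K0_le[OF y q(1)])
  finally show ?thesis by (simp add: C1_def algebra_simps)
qed

lemma pow_g_le8: "2 powr (\<gamma> + dl) \<le> 8"
proof -
  have "2 powr (\<gamma> + dl) \<le> 2 powr 3" by (rule powr_mono) (use gam2 dl_le1 gam1 in auto)
  thus ?thesis by simp
qed

lemma Ssc:
  assumes q: "\<gamma> + 2 * dl \<le> q" "q \<le> 2" and l: "0 < l" "l \<le> 1" and ls: "l * s \<ge> y1"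
  shows "measure_pmf.expectation p (\<lambda>d. ((real d + 1) / s) powr q * indicator {k. real k \<le> l * s} d)
     \<le> 8 * C1 * l powr (q - \<gamma> - dl) * G s"
proof -
  have "l * s > 0" using ls y1_ge by linarith
  hence spos: "s > 0" using l by (simp add: zero_less_mult_iff)
  have Gb: "G (l * s) \<le> 2 powr (\<gamma> + dl) * l powr (- (\<gamma> + dl)) * G s"
  proof -
    have "G (l * s) \<le> (2 * (1 / l)) powr (\<gamma> + dl) * G (1 / l * (l * s))"
      by (rule PG2) (use ls y1_ge l in auto)
    also have "1 / l * (l * s) = s" using l by simp
    also have "(2 * (1 / l)) powr (\<gamma> + dl) = 2 powr (\<gamma> + dl) * l powr (- (\<gamma> + dl))"
    proof -
      have "l powr (- (\<gamma> + dl)) = 1 / l powr (\<gamma> + dl)" unfolding powr_minus by (simp add: divide_inverse)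
      thus ?thesis using l by (simp add: powr_mult powr_divide)
    qed
    finally show ?thesis .
  qed
  have "(\<lambda>d. ((real d + 1) / s) powr q * indicator {k. real k \<le> l * s} d)
      = (\<lambda>d. (real d + 1) powr q * indicator {k. real k \<le> l * s} d / s powr q)"
    by (simp add: powr_divide)
  hence "measure_pmf.expectation p (\<lambda>d. ((real d + 1) / s) powr q * indicator {k. real k \<le> l * s} d)
      = measure_pmf.expectation p (\<lambda>d. (real d + 1) powr q * indicator {k. real k \<le> l * s} d) / s powr q"
    by simp
  also have "\<dots> \<le> C1 * ((l * s) powr q * G (l * s)) / s powr q"
    by (intro divide_right_mono M1 q ls) simp
  also have "\<dots> = C1 * l powr q * G (l * s)" using spos l by (simp add: powr_mult)
  also have "\<dots> \<le> C1 * l powr q * (2 powr (\<gamma> + dl) * l powr (- (\<gamma> + dl)) * G s)"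
    by (intro mult_left_mono Gb) (use C_pos in auto)
  also have "\<dots> = 2 powr (\<gamma> + dl) * (C1 * (l powr q * l powr (- (\<gamma> + dl))) * G s)" by (simp add: mult_ac)
  also have "l powr q * l powr (- (\<gamma> + dl)) = l powr (q - \<gamma> - dl)" using l by (simp add: powr_add[symmetric] algebra_simps)
  also have "2 powr (\<gamma> + dl) * (C1 * l powr (q - \<gamma> - dl) * G s) \<le> 8 * (C1 * l powr (q - \<gamma> - dl) * G s)"
    by (intro mult_right_mono pow_g_le8) (use C_pos G_nonneg in auto)
  finally show ?thesis by (simp add: mult_ac)
qed

lemma Bsc:
  assumes q: "0 \<le> q" "q \<le> \<gamma> - 2 * dl" and l: "l \<ge> 1" and s: "s \<ge> x0"
  shows "integrable p (\<lambda>d. ((real d + 1) / s) powr q * indicator {k. real k > l * s} d) \<and>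
     measure_pmf.expectation p (\<lambda>d. ((real d + 1) / s) powr q * indicator {k. real k > l * s} d)
     \<le> 16 * C2 * l powr (q + dl - \<gamma>) * G s"
proof -
  have spos: "s > 0" using s x0_ge1 by simp
  have ls: "l * s \<ge> x0" using s l x0_ge1 by (smt (verit) mult_le_cancel_right1)
  have ls1: "l * s \<ge> 1" using ls x0_ge1 by simp
  note m2 = M2[OF q ls]
  have pw: "\<bar>((real d + 1) / s) powr q * indicator {k. real k > l * s} d\<bar>
      \<le> 4 / s powr q * (real d powr q * indicator {k. real k > l * s} d)" for d
  proof (cases "real d > l * s")
    case True
    hence d1: "real d \<ge> 1" using ls1 by simp
    have "((real d + 1) / s) powr q = (real d + 1) powr q / s powr q" by (simp add: powr_divide)
    also have "(real d + 1) powr q \<le> (2 * real d) powr q" by (rule powr_mono2) (use q d1 in auto)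
    also have "(2 * real d) powr q = 2 powr q * real d powr q" by (simp add: powr_mult)
    also have "2 powr q \<le> 2 powr 2" by (rule powr_mono) (use q gam2 dl_pos in auto)
    hence "2 powr q * real d powr q / s powr q \<le> 4 * real d powr q / s powr q"
      by (intro divide_right_mono mult_right_mono) auto
    finally show ?thesis using True spos by (simp add: divide_right_mono)
  qed simp
  have int: "integrable p (\<lambda>d. ((real d + 1) / s) powr q * indicator {k. real k > l * s} d)"
    by (rule Bochner_Integration.integrable_bound[where f = "\<lambda>d. 4 / s powr q * (real d powr q * indicator {k. real k > l * s} d)"])
       (use m2 pw in auto)
  have "measure_pmf.expectation p (\<lambda>d. ((real d + 1) / s) powr q * indicator {k. real k > l * s} d)
      \<le> measure_pmf.expectation p (\<lambda>d. 4 / s powr q * (real d powr q * indicator {k. real k > l * s} d))"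
    by (rule integral_mono) (use int m2 pw in \<open>auto simp: abs_le_iff\<close>)
  also have "\<dots> = 4 / s powr q * measure_pmf.expectation p (\<lambda>d. real d powr q * indicator {k. real k > l * s} d)"
    by simp
  also have "\<dots> \<le> 4 / s powr q * (4 / (1 - rr) * ((l * s) powr q * G (l * s)))"
    by (intro mult_left_mono) (use m2 in auto)
  also have "\<dots> = 4 * C2 * l powr q * G (l * s)" using spos l by (simp add: powr_mult C2_def)
  also have "G (l * s) \<le> 2 powr \<gamma> * l powr (dl - \<gamma>) * G s" by (rule PG1[OF s l])
  hence "4 * C2 * l powr q * G (l * s) \<le> 4 * C2 * l powr q * (2 powr \<gamma> * l powr (dl - \<gamma>) * G s)"
    by (intro mult_left_mono) (use C_pos in auto)
  also have "\<dots> = 2 powr \<gamma> * (4 * C2 * (l powr q * l powr (dl - \<gamma>)) * G s)" by (simp add: mult_ac)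
  also have "l powr q * l powr (dl - \<gamma>) = l powr (q + dl - \<gamma>)" using l by (simp add: powr_add[symmetric] algebra_simps)
  also have "2 powr \<gamma> * (4 * C2 * l powr (q + dl - \<gamma>) * G s) \<le> 4 * (4 * C2 * l powr (q + dl - \<gamma>) * G s)"
  proof (intro mult_right_mono)
    have "2 powr \<gamma> \<le> 2 powr 2" by (rule powr_mono) (use gam2 in auto)
    thus "2 powr \<gamma> \<le> 4" by simp
  qed (use C_pos G_nonneg in auto)
  finally show ?thesis using int by (simp add: mult_ac)
qed

end

definition psi :: "real \<Rightarrow> real \<Rightarrow> real \<Rightarrow> real" where
  "psi s x y = min 1 (4 * (x + 1) * (y + 1) / s\<^sup>2)"

definition psi3 :: "real \<Rightarrow> real \<Rightarrow> real \<Rightarrow> real \<Rightarrow> real" where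
  "psi3 s x y z = psi s x y * psi s y z * psi s x z"

lemma psi_nonneg: "x \<ge> 0 \<Longrightarrow> y \<ge> 0 \<Longrightarrow> psi s x y \<ge> 0"
  by (simp add: psi_def)

lemma psi_le1: "psi s x y \<le> 1"
  by (simp add: psi_def)

lemma psi_comm: "psi s x y = psi s y x"
proof -
  have "4 * (x + 1) * (y + 1) = 4 * (y + 1) * (x + 1)" by (simp only: mult_ac)
  thus ?thesis unfolding psi_def by simp
qed

lemma psi3_perm: "psi3 s x y z = psi3 s y x z" "psi3 s x y z = psi3 s z x y"
  by (simp_all add: psi3_def psi_comm mult_ac)

lemma psi3_nonneg: "x \<ge> 0 \<Longrightarrow> y \<ge> 0 \<Longrightarrow> z \<ge> 0 \<Longrightarrow> psi3 s x y z \<ge> 0"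
  by (simp add: psi3_def psi_nonneg)

lemma psi3_le1: "x \<ge> 0 \<Longrightarrow> y \<ge> 0 \<Longrightarrow> z \<ge> 0 \<Longrightarrow> psi3 s x y z \<le> 1"
  unfolding psi3_def by (intro mult_le_one psi_le1 psi_nonneg mult_nonneg_nonneg) auto

lemma psi_le:
  assumes s: "s > 0" and x: "x \<ge> 0" and y: "y \<ge> 0" and a: "0 \<le> a" "a \<le> 1"
  shows "psi s x y \<le> 4 * (((x + 1) / s) powr a * ((y + 1) / s) powr a)"
proof -
  define t where "t = (x + 1) * (y + 1) / s\<^sup>2"
  have t0: "t \<ge> 0" using x y by (simp add: t_def)
  have teq: "t powr a = ((x + 1) / s) powr a * ((y + 1) / s) powr a"
  proof -
    have "t = ((x + 1) / s) * ((y + 1) / s)" by (simp add: t_def power2_eq_square)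
    moreover have "(((x + 1) / s) * ((y + 1) / s)) powr a = ((x + 1) / s) powr a * ((y + 1) / s) powr a"
      by (rule powr_mult)
    ultimately show ?thesis by metis
  qed
  have "psi s x y = min 1 (4 * t)" unfolding psi_def t_def by (simp only: mult.assoc times_divide_eq_right)
  also have "\<dots> \<le> 4 * t powr a"
  proof (cases "t \<ge> 1")
    case True
    hence "1 \<le> t powr a" using a by (simp add: ge_one_powr_ge_zero)
    thus ?thesis by simp
  next
    case False
    have "t \<le> t powr a"
    proof (cases "t = 0")
      case False
      hence "t powr 1 \<le> t powr a" using \<open>\<not> t \<ge> 1\<close> t0 a by (intro powr_mono') auto
      thus ?thesis using False t0 by simp
    qed simp
    thus ?thesis by simp
  qed
  finally show ?thesis by (simp add: teq)
qed

lemma psi3_le: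
  assumes s: "s > 0" and x: "x \<ge> 0" and y: "y \<ge> 0" and z: "z \<ge> 0"
    and a: "0 \<le> a" "a \<le> 1" and b: "0 \<le> b" "b \<le> 1" and c: "0 \<le> c" "c \<le> 1"
  shows "psi3 s x y z \<le> 64 * (((x + 1) / s) powr (a + c) * ((y + 1) / s) powr (a + b) * ((z + 1) / s) powr (b + c))"
proof -
  let ?X = "(x + 1) / s" and ?Y = "(y + 1) / s" and ?Z = "(z + 1) / s"
  have "psi3 s x y z \<le> (4 * (?X powr a * ?Y powr a)) * (4 * (?Y powr b * ?Z powr b)) * (4 * (?X powr c * ?Z powr c))"
    unfolding psi3_def
    by (intro mult_mono psi_le psi_nonneg s x y z a b c mult_nonneg_nonneg) auto
  also have "\<dots> = 64 * ((?X powr a * ?X powr c) * (?Y powr a * ?Y powr b) * (?Z powr b * ?Z powr c))"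
    by (simp add: mult_ac)
  also have "\<dots> = 64 * (?X powr (a + c) * ?Y powr (a + b) * ?Z powr (b + c))"
    by (simp add: powr_add)
  finally show ?thesis .
qed

context lsetup
begin

definition th :: real where "th = (3 * \<gamma> - 2) / 4"
definition et :: real where "et = (2 - \<gamma>) / 4"

definition wS :: "real \<Rightarrow> real \<Rightarrow> real \<Rightarrow> nat \<Rightarrow> real" where
  "wS s c q d = ((real d + 1) / s) powr q * indicator {k. real k \<le> c} d"
definition wB :: "real \<Rightarrow> real \<Rightarrow> real \<Rightarrow> nat \<Rightarrow> real" where
  "wB s c q d = ((real d + 1) / s) powr q * indicator {k. real k > c} d"

lemma w_nonneg: "wS s c q d \<ge> 0" "wB s c q d \<ge> 0"
  by (simp_all add: wS_def wB_def)

lemma th_et: "0 \<le> th" "th \<le> 1" "0 \<le> et" "et \<le> 1" "0 \<le> 1 - et" "1 - et \<le> 1"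
  using gam1 gam2 by (auto simp: th_def et_def)

definition RS :: "real \<Rightarrow> real \<Rightarrow> nat \<Rightarrow> nat \<Rightarrow> nat \<Rightarrow> real" where
  "RS s e d1 d2 d3 =
     wS s (e * s) 2 d1 * wS s s 2 d2 * wS s s 2 d3
   + wS s (e * s) (1 + th) d1 * wS s s (1 + th) d2 * wB s s (2 * th) d3
   + wS s (e * s) (1 + th) d1 * wB s s (2 * th) d2 * wS s s (1 + th) d3
   + wS s (e * s) (2 - 2 * et) d1 * wB s s (1 - et) d2 * wB s s (1 - et) d3
   + wB s (s / e) (2 * th) d1 * wS s s (1 + th) d2 * wS s s (1 + th) d3
   + wB s (s / e) (1 - et) d1 * wS s s (2 - 2 * et) d2 * wB s s (1 - et) d3
   + wB s (s / e) (1 - et) d1 * wB s s (1 - et) d2 * wS s s (2 - 2 * et) d3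
   + wB s (s / e) 0 d1 * wB s s 0 d2 * wB s s 0 d3"

lemma sum8_ge:
  fixes t1 t2 t3 t4 t5 t6 t7 t8 :: real
  assumes "0 \<le> t1" "0 \<le> t2" "0 \<le> t3" "0 \<le> t4" "0 \<le> t5" "0 \<le> t6" "0 \<le> t7" "0 \<le> t8"
  shows "t1 \<le> t1 + t2 + t3 + t4 + t5 + t6 + t7 + t8" "t2 \<le> t1 + t2 + t3 + t4 + t5 + t6 + t7 + t8"
    "t3 \<le> t1 + t2 + t3 + t4 + t5 + t6 + t7 + t8" "t4 \<le> t1 + t2 + t3 + t4 + t5 + t6 + t7 + t8"
    "t5 \<le> t1 + t2 + t3 + t4 + t5 + t6 + t7 + t8" "t6 \<le> t1 + t2 + t3 + t4 + t5 + t6 + t7 + t8"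
    "t7 \<le> t1 + t2 + t3 + t4 + t5 + t6 + t7 + t8" "t8 \<le> t1 + t2 + t3 + t4 + t5 + t6 + t7 + t8"
  using assms by linarith+

lemma region_pw:
  assumes s: "s > 0" and e: "0 < e" "e < 1"
  shows "indicator {k. real k < e * s \<or> real k > s / e} d1 * psi3 s (real d1) (real d2) (real d3)
     \<le> 64 * RS s e d1 d2 d3"
proof -
  let ?X = "(real d1 + 1) / s" and ?Y = "(real d2 + 1) / s" and ?Z = "(real d3 + 1) / s"
  note P = psi3_le[OF s of_nat_0_le_iff of_nat_0_le_iff of_nat_0_le_iff]
  note nn = w_nonneg
  have e_th: "th + 1 = 1 + th" "th + th = 2 * th" by simp_all
  have e_et: "1 - et + (1 - et) = 2 - 2 * et" "1 - et + 0 = 1 - et" "0 + (1 - et) = 1 - et" by simp_all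
  have T: "0 \<le> wS s (e * s) 2 d1 * wS s s 2 d2 * wS s s 2 d3"
     "0 \<le> wS s (e * s) (1 + th) d1 * wS s s (1 + th) d2 * wB s s (2 * th) d3"
     "0 \<le> wS s (e * s) (1 + th) d1 * wB s s (2 * th) d2 * wS s s (1 + th) d3"
     "0 \<le> wS s (e * s) (2 - 2 * et) d1 * wB s s (1 - et) d2 * wB s s (1 - et) d3"
     "0 \<le> wB s (s / e) (2 * th) d1 * wS s s (1 + th) d2 * wS s s (1 + th) d3"
     "0 \<le> wB s (s / e) (1 - et) d1 * wS s s (2 - 2 * et) d2 * wB s s (1 - et) d3"
     "0 \<le> wB s (s / e) (1 - et) d1 * wB s s (1 - et) d2 * wS s s (2 - 2 * et) d3"
     "0 \<le> wB s (s / e) 0 d1 * wB s s 0 d2 * wB s s 0 d3"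
    by (simp_all add: nn)
  note RSg = sum8_ge[OF T, folded RS_def]
  show ?thesis
  proof (cases "real d1 < e * s \<or> real d1 > s / e")
    case False
    thus ?thesis using T by (simp add: RS_def)
  next
    case True
    hence ind: "indicator {k. real k < e * s \<or> real k > s / e} d1 = (1::real)" by simp
    have main: "psi3 s (real d1) (real d2) (real d3) \<le> 64 * RS s e d1 d2 d3"
    proof (cases "real d1 < e * s")
      case x: True
      show ?thesis
      proof (cases "real d2 \<le> s")
        case y: True
        show ?thesis
        proof (cases "real d3 \<le> s")
          case z: True
          have "psi3 s (real d1) (real d2) (real d3) \<le> 64 * (wS s (e * s) 2 d1 * wS s s 2 d2 * wS s s 2 d3)"
            using P[of 1 1 1] x y z by (simp add: wS_def)
          moreover have "wS s (e * s) 2 d1 * wS s s 2 d2 * wS s s 2 d3 \<le> RS s e d1 d2 d3"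
            by (rule RSg)
          ultimately show ?thesis by linarith
        next
          case z: False
          have "psi3 s (real d1) (real d2) (real d3) \<le> 64 * (wS s (e * s) (1 + th) d1 * wS s s (1 + th) d2 * wB s s (2 * th) d3)"
            using P[of 1 th th, unfolded e_th] th_et x y z by (simp add: wS_def wB_def)
          moreover have "wS s (e * s) (1 + th) d1 * wS s s (1 + th) d2 * wB s s (2 * th) d3 \<le> RS s e d1 d2 d3"
            by (rule RSg)
          ultimately show ?thesis by linarith
        qed
      next
        case y: False
        show ?thesis
        proof (cases "real d3 \<le> s")
          case z: True
          have "psi3 s (real d1) (real d2) (real d3) \<le> 64 * (wS s (e * s) (1 + th) d1 * wB s s (2 * th) d2 * wS s s (1 + th) d3)"
            using P[of th th 1, unfolded e_th] th_et x y z by (simp add: wS_def wB_def)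
          moreover have "wS s (e * s) (1 + th) d1 * wB s s (2 * th) d2 * wS s s (1 + th) d3 \<le> RS s e d1 d2 d3"
            by (rule RSg)
          ultimately show ?thesis by linarith
        next
          case z: False
          have "psi3 s (real d1) (real d2) (real d3) \<le> 64 * (wS s (e * s) (2 - 2 * et) d1 * wB s s (1 - et) d2 * wB s s (1 - et) d3)"
            using P[of "1 - et" 0 "1 - et", unfolded e_et] th_et x y z by (simp add: wS_def wB_def)
          moreover have "wS s (e * s) (2 - 2 * et) d1 * wB s s (1 - et) d2 * wB s s (1 - et) d3 \<le> RS s e d1 d2 d3"
            by (rule RSg)
          ultimately show ?thesis by linarith
        qed
      qed
    next
      case x0: False
      hence x: "real d1 > s / e" using True by simp
      show ?thesis
      proof (cases "real d2 \<le> s")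
        case y: True
        show ?thesis
        proof (cases "real d3 \<le> s")
          case z: True
          have "psi3 s (real d1) (real d2) (real d3) \<le> 64 * (wB s (s / e) (2 * th) d1 * wS s s (1 + th) d2 * wS s s (1 + th) d3)"
            using P[of th 1 th, unfolded e_th] th_et x y z by (simp add: wS_def wB_def)
          moreover have "wB s (s / e) (2 * th) d1 * wS s s (1 + th) d2 * wS s s (1 + th) d3 \<le> RS s e d1 d2 d3"
            by (rule RSg)
          ultimately show ?thesis by linarith
        next
          case z: False
          have "psi3 s (real d1) (real d2) (real d3) \<le> 64 * (wB s (s / e) (1 - et) d1 * wS s s (2 - 2 * et) d2 * wB s s (1 - et) d3)"
            using P[of "1 - et" "1 - et" 0, unfolded e_et] th_et x y z by (simp add: wS_def wB_def)
          moreover have "wB s (s / e) (1 - et) d1 * wS s s (2 - 2 * et) d2 * wB s s (1 - et) d3 \<le> RS s e d1 d2 d3"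
            by (rule RSg)
          ultimately show ?thesis by linarith
        qed
      next
        case y: False
        show ?thesis
        proof (cases "real d3 \<le> s")
          case z: True
          have "psi3 s (real d1) (real d2) (real d3) \<le> 64 * (wB s (s / e) (1 - et) d1 * wB s s (1 - et) d2 * wS s s (2 - 2 * et) d3)"
            using P[of 0 "1 - et" "1 - et", unfolded e_et] th_et x y z by (simp add: wS_def wB_def)
          moreover have "wB s (s / e) (1 - et) d1 * wB s s (1 - et) d2 * wS s s (2 - 2 * et) d3 \<le> RS s e d1 d2 d3"
            by (rule RSg)
          ultimately show ?thesis by linarith
        next
          case z: False
          have "psi3 s (real d1) (real d2) (real d3) \<le> 64 * (wB s (s / e) 0 d1 * wB s s 0 d2 * wB s s 0 d3)"
            using P[of 0 0 0] x y z s by (simp add: wB_def)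
          moreover have "wB s (s / e) 0 d1 * wB s s 0 d2 * wB s s 0 d3 \<le> RS s e d1 d2 d3"
            by (rule RSg)
          ultimately show ?thesis by linarith
        qed
      qed
    qed
    thus ?thesis using ind by simp
  qed
qed

end

lemma prod3_Pi:
  fixes f1 f2 f3 :: "nat \<Rightarrow> real" and q :: "nat pmf" and n v u w :: nat
  assumes vuw: "v < n" "u < n" "w < n" "v \<noteq> u" "v \<noteq> w" "u \<noteq> w"
    and int: "integrable q f1" "integrable q f2" "integrable q f3"
    and nn: "\<And>d. f1 d \<ge> 0" "\<And>d. f2 d \<ge> 0" "\<And>d. f3 d \<ge> 0"
  shows "integrable (Pi_pmf {..<n} 0 (\<lambda>_. q)) (\<lambda>D. f1 (D v) * f2 (D u) * f3 (D w))"
    "measure_pmf.expectation (Pi_pmf {..<n} 0 (\<lambda>_. q)) (\<lambda>D. f1 (D v) * f2 (D u) * f3 (D w))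
       = measure_pmf.expectation q f1 * measure_pmf.expectation q f2 * measure_pmf.expectation q f3"
proof -
  define F where "F = (\<lambda>x. if x = v then f1 else if x = u then f2 else if x = w then f3 else (\<lambda>_. 1::real))"
  have prodF: "(\<Prod>x\<in>{..<n}. g x) = g v * g u * g w" if "\<And>x::nat. x \<notin> {v, u, w} \<Longrightarrow> g x = 1" for g :: "nat \<Rightarrow> real"
  proof -
    have "(\<Prod>x\<in>{..<n}. g x) = (\<Prod>x\<in>{v, u, w}. g x)"
      by (rule prod.mono_neutral_right) (use vuw that in auto)
    also have "\<dots> = g v * g u * g w" using vuw by (simp add: mult_ac)
    finally show ?thesis .
  qed
  have eqf: "(\<lambda>D. f1 (D v) * f2 (D u) * f3 (D w)) = (\<lambda>D. \<Prod>x\<in>{..<n}. F x (D x))"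
  proof
    fix D :: "nat \<Rightarrow> nat"
    have "(\<Prod>x\<in>{..<n}. F x (D x)) = F v (D v) * F u (D u) * F w (D w)"
      by (rule prodF) (auto simp: F_def)
    also have "\<dots> = f1 (D v) * f2 (D u) * f3 (D w)" using vuw by (simp add: F_def)
    finally show "f1 (D v) * f2 (D u) * f3 (D w) = (\<Prod>x\<in>{..<n}. F x (D x))" by simp
  qed
  have intF: "integrable q (F x)" for x using int by (auto simp: F_def)
  have nnF: "F x y \<ge> 0" for x y using nn by (auto simp: F_def)
  show "integrable (Pi_pmf {..<n} 0 (\<lambda>_. q)) (\<lambda>D. f1 (D v) * f2 (D u) * f3 (D w))"
    unfolding eqf by (rule integrable_prod_Pi_pmf) (auto intro: intF)
  have "measure_pmf.expectation (Pi_pmf {..<n} 0 (\<lambda>_. q)) (\<lambda>D. \<Prod>x\<in>{..<n}. F x (D x))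
      = (\<Prod>x\<in>{..<n}. measure_pmf.expectation q (F x))"
    by (rule expectation_prod_Pi_pmf) (auto intro: intF nnF)
  also have "\<dots> = measure_pmf.expectation q (F v) * measure_pmf.expectation q (F u) * measure_pmf.expectation q (F w)"
    by (rule prodF) (auto simp: F_def)
  also have "\<dots> = measure_pmf.expectation q f1 * measure_pmf.expectation q f2 * measure_pmf.expectation q f3"
    using vuw by (simp add: F_def)
  finally show "measure_pmf.expectation (Pi_pmf {..<n} 0 (\<lambda>_. q)) (\<lambda>D. f1 (D v) * f2 (D u) * f3 (D w))
       = measure_pmf.expectation q f1 * measure_pmf.expectation q f2 * measure_pmf.expectation q f3"
    unfolding eqf .
qed

context lsetup
begin

definition KK :: real where "KK = 8 * C1 + 16 * C2"

lemma KK_pos: "KK > 0" using C_pos by (simp add: KK_def)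

lemma exps:
  "\<gamma> + 2 * dl \<le> 2" "\<gamma> + 2 * dl \<le> 1 + th" "1 + th \<le> 2" "\<gamma> + 2 * dl \<le> 2 - 2 * et" "2 - 2 * et \<le> 2" "0 \<le> 2 * th" "2 * th \<le> \<gamma> - 2 * dl" "0 \<le> 1 - et" "1 - et \<le> \<gamma> - 2 * dl" "0 \<le> \<gamma> - 2 * dl"
proof -
  have a: "8 * dl \<le> 2 - \<gamma>" using dl_le1 by simp
  have b: "4 * dl \<le> \<gamma> - 1" using dl_le2 by simp
  have c: "4 * th = 3 * \<gamma> - 2" "4 * et = 2 - \<gamma>" by (simp_all add: th_def et_def)
  note f = a b c dl_pos gam1 gam2
  show "\<gamma> + 2 * dl \<le> 2" using f by linarith
  show "\<gamma> + 2 * dl \<le> 1 + th" using f by linarith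
  show "1 + th \<le> 2" using f by linarith
  show "\<gamma> + 2 * dl \<le> 2 - 2 * et" using f by linarith
  show "2 - 2 * et \<le> 2" using f by linarith
  show "0 \<le> 2 * th" using f by linarith
  show "2 * th \<le> \<gamma> - 2 * dl" using f by linarith
  show "0 \<le> 1 - et" using f by linarith
  show "1 - et \<le> \<gamma> - 2 * dl" using f by linarith
  show "0 \<le> \<gamma> - 2 * dl" using f by linarith
qed

lemma wS_int:
  assumes s: "s > 0" and q: "q \<ge> 0" shows "integrable p (wS s c q)"
proof (rule int_bdd[where B = "((max c 0 + 1) / s) powr q"])
  fix d
  show "\<bar>wS s c q d\<bar> \<le> ((max c 0 + 1) / s) powr q"
  proof (cases "real d \<le> c")
    case True
    have "((real d + 1) / s) powr q \<le> ((max c 0 + 1) / s) powr q"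
      by (rule powr_mono2) (use True s q in \<open>auto intro!: divide_right_mono\<close>)
    thus ?thesis using True by (simp add: wS_def)
  qed (simp add: wS_def)
qed

lemma eps_pow:
  assumes e: "0 < e" "e < 1" and a: "dl \<le> a" shows "e powr a \<le> e powr dl"
  by (rule powr_mono') (use e a in auto)

lemma EwS_eps:
  assumes q: "\<gamma> + 2 * dl \<le> q" "q \<le> 2" and e: "0 < e" "e < 1" and es: "e * s \<ge> y1"
  shows "integrable p (wS s (e * s) q) \<and> measure_pmf.expectation p (wS s (e * s) q) \<le> KK * e powr dl * G s"
proof
  have "e * s > 0" using es y1_ge by linarith
  hence s: "s > 0" using e by (simp add: zero_less_mult_iff)
  show "integrable p (wS s (e * s) q)" by (rule wS_int[OF s]) (use q exps gam1 dl_pos in auto)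
  have "measure_pmf.expectation p (wS s (e * s) q) \<le> 8 * C1 * e powr (q - \<gamma> - dl) * G s"
    unfolding wS_def by (rule Ssc[OF q]) (use e es in auto)
  also have "\<dots> \<le> 8 * C1 * e powr dl * G s"
    by (intro mult_right_mono mult_left_mono eps_pow e) (use q C_pos G_nonneg in auto)
  also have "\<dots> \<le> KK * e powr dl * G s"
    by (intro mult_right_mono) (use C_pos G_nonneg in \<open>auto simp: KK_def\<close>)
  finally show "measure_pmf.expectation p (wS s (e * s) q) \<le> KK * e powr dl * G s" .
qed

lemma EwS_1:
  assumes q: "\<gamma> + 2 * dl \<le> q" "q \<le> 2" and s: "s \<ge> y1"
  shows "integrable p (wS s s q) \<and> measure_pmf.expectation p (wS s s q) \<le> KK * G s"
proof
  have s0: "s > 0" using s y1_ge by linarith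
  show "integrable p (wS s s q)" by (rule wS_int[OF s0]) (use q exps gam1 dl_pos in auto)
  have "measure_pmf.expectation p (wS s s q) \<le> 8 * C1 * 1 powr (q - \<gamma> - dl) * G s"
    using Ssc[OF q, of 1 s] s unfolding wS_def by simp
  also have "\<dots> \<le> KK * G s"
    by (intro mult_right_mono) (use C_pos G_nonneg in \<open>auto simp: KK_def\<close>)
  finally show "measure_pmf.expectation p (wS s s q) \<le> KK * G s" .
qed

lemma EwB_1:
  assumes q: "0 \<le> q" "q \<le> \<gamma> - 2 * dl" and s: "s \<ge> x0"
  shows "integrable p (wB s s q) \<and> measure_pmf.expectation p (wB s s q) \<le> KK * G s"
proof -
  have b: "integrable p (wB s s q) \<and> measure_pmf.expectation p (wB s s q) \<le> 16 * C2 * 1 powr (q + dl - \<gamma>) * G s"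
    using Bsc[OF q _ s, of 1] unfolding wB_def by simp
  have "16 * C2 * 1 powr (q + dl - \<gamma>) * G s \<le> KK * G s"
    by (intro mult_right_mono) (use C_pos G_nonneg in \<open>auto simp: KK_def\<close>)
  thus ?thesis using b by linarith
qed

lemma EwB_eps:
  assumes q: "0 \<le> q" "q \<le> \<gamma> - 2 * dl" and e: "0 < e" "e < 1" and s: "s \<ge> x0"
  shows "integrable p (wB s (s / e) q) \<and> measure_pmf.expectation p (wB s (s / e) q) \<le> KK * e powr dl * G s"
proof -
  have eq: "1 / e * s = s / e" by simp
  have b: "integrable p (wB s (s / e) q) \<and> measure_pmf.expectation p (wB s (s / e) q) \<le> 16 * C2 * (1 / e) powr (q + dl - \<gamma>) * G s"
    using Bsc[OF q _ s, of "1 / e"] e unfolding wB_def eq by simp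
  have "(1 / e) powr (q + dl - \<gamma>) = e powr (\<gamma> - q - dl)"
    using e by (simp add: powr_divide powr_minus_divide[symmetric] algebra_simps)
  also have "\<dots> \<le> e powr dl" by (rule eps_pow) (use e q in auto)
  finally have "16 * C2 * (1 / e) powr (q + dl - \<gamma>) * G s \<le> 16 * C2 * e powr dl * G s"
    by (intro mult_right_mono mult_left_mono) (use C_pos G_nonneg in auto)
  also have "\<dots> \<le> KK * e powr dl * G s"
    by (intro mult_right_mono) (use C_pos G_nonneg in \<open>auto simp: KK_def\<close>)
  finally show ?thesis using b by linarith
qed

end

definition IB :: "'a pmf \<Rightarrow> ('a \<Rightarrow> real) \<Rightarrow> real \<Rightarrow> bool" where
  "IB M f a \<longleftrightarrow> integrable M f \<and> measure_pmf.expectation M f \<le> a"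

lemma IB_add: "IB M f a \<Longrightarrow> IB M g b \<Longrightarrow> IB M (\<lambda>x. f x + g x) (a + b)"
  unfolding IB_def by (auto simp: Bochner_Integration.integral_add)

lemma IB_cmult: "IB M f a \<Longrightarrow> c \<ge> 0 \<Longrightarrow> IB M (\<lambda>x. c * f x) (c * a)"
  unfolding IB_def by (auto intro: mult_left_mono)

lemma term3:
  fixes f1 f2 f3 :: "nat \<Rightarrow> real" and q :: "nat pmf" and n v u w :: nat
  assumes vuw: "v < n" "u < n" "w < n" "v \<noteq> u" "v \<noteq> w" "u \<noteq> w"
    and int: "integrable q f1" "integrable q f2" "integrable q f3"
    and nn: "\<And>d. f1 d \<ge> 0" "\<And>d. f2 d \<ge> 0" "\<And>d. f3 d \<ge> 0"
    and b: "measure_pmf.expectation q f1 \<le> A1" "measure_pmf.expectation q f2 \<le> A2" "measure_pmf.expectation q f3 \<le> A3"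
  shows "IB (Pi_pmf {..<n} 0 (\<lambda>_. q)) (\<lambda>D. f1 (D v) * f2 (D u) * f3 (D w)) (A1 * A2 * A3)"
proof -
  note P = prod3_Pi[OF vuw int nn]
  have e: "measure_pmf.expectation q f1 \<ge> 0" "measure_pmf.expectation q f2 \<ge> 0" "measure_pmf.expectation q f3 \<ge> 0"
    using nn by (auto intro: Bochner_Integration.integral_nonneg)
  have "measure_pmf.expectation q f1 * measure_pmf.expectation q f2 * measure_pmf.expectation q f3 \<le> A1 * A2 * A3"
    by (intro mult_mono b e mult_nonneg_nonneg) (use e b in auto)
  thus ?thesis unfolding IB_def using P by simp
qed

context lsetup
begin

lemma Eout:
  fixes n v u w :: nat
  assumes vuw: "v < n" "u < n" "w < n" "v \<noteq> u" "v \<noteq> w" "u \<noteq> w"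
    and e: "0 < e" "e < 1" and es: "e * s \<ge> y1"
  shows "measure_pmf.expectation (Pi_pmf {..<n} 0 (\<lambda>_. p))
      (\<lambda>D. indicator {k. real k < e * s \<or> real k > s / e} (D v) * psi3 s (real (D v)) (real (D u)) (real (D w)))
     \<le> 512 * KK ^ 3 * e powr dl * G s ^ 3"
proof -
  let ?M = "Pi_pmf {..<n} 0 (\<lambda>_. p)"
  have "e * s > 0" using es y1_ge by linarith
  hence spos: "s > 0" using e by (simp add: zero_less_mult_iff)
  have "e * s \<le> s" using e spos by simp
  hence s1: "s \<ge> y1" using es by linarith
  hence sx: "s \<ge> x0" using y1_ge by linarith
  define A where "A = KK * e powr dl * G s"
  define B where "B = KK * G s"
  note nn = w_nonneg
  note T = term3[OF vuw]
  note ex = exps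
  have ES: "integrable p (wS s (e * s) q) \<and> measure_pmf.expectation p (wS s (e * s) q) \<le> A"
    if "\<gamma> + 2 * dl \<le> q" "q \<le> 2" for q
    using EwS_eps[OF that e es] by (simp add: A_def)
  have EB: "integrable p (wB s (s / e) q) \<and> measure_pmf.expectation p (wB s (s / e) q) \<le> A"
    if "0 \<le> q" "q \<le> \<gamma> - 2 * dl" for q
    using EwB_eps[OF that e sx] by (simp add: A_def)
  have ES1: "integrable p (wS s s q) \<and> measure_pmf.expectation p (wS s s q) \<le> B"
    if "\<gamma> + 2 * dl \<le> q" "q \<le> 2" for q
    using EwS_1[OF that s1] by (simp add: B_def)
  have EB1: "integrable p (wB s s q) \<and> measure_pmf.expectation p (wB s s q) \<le> B"
    if "0 \<le> q" "q \<le> \<gamma> - 2 * dl" for q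
    using EwB_1[OF that sx] by (simp add: B_def)
  have t1: "IB ?M (\<lambda>D. wS s (e * s) 2 (D v) * wS s s 2 (D u) * wS s s 2 (D w)) (A * B * B)"
    using ES[of 2] ES1[of 2] ex by (intro T) (auto simp: nn)
  have t2: "IB ?M (\<lambda>D. wS s (e * s) (1 + th) (D v) * wS s s (1 + th) (D u) * wB s s (2 * th) (D w)) (A * B * B)"
    using ES[of "1 + th"] ES1[of "1 + th"] EB1[of "2 * th"] ex by (intro T) (auto simp: nn)
  have t3: "IB ?M (\<lambda>D. wS s (e * s) (1 + th) (D v) * wB s s (2 * th) (D u) * wS s s (1 + th) (D w)) (A * B * B)"
    using ES[of "1 + th"] ES1[of "1 + th"] EB1[of "2 * th"] ex by (intro T) (auto simp: nn)
  have t4: "IB ?M (\<lambda>D. wS s (e * s) (2 - 2 * et) (D v) * wB s s (1 - et) (D u) * wB s s (1 - et) (D w)) (A * B * B)"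
    using ES[of "2 - 2 * et"] EB1[of "1 - et"] ex by (intro T) (auto simp: nn)
  have t5: "IB ?M (\<lambda>D. wB s (s / e) (2 * th) (D v) * wS s s (1 + th) (D u) * wS s s (1 + th) (D w)) (A * B * B)"
    using EB[of "2 * th"] ES1[of "1 + th"] ex by (intro T) (auto simp: nn)
  have t6: "IB ?M (\<lambda>D. wB s (s / e) (1 - et) (D v) * wS s s (2 - 2 * et) (D u) * wB s s (1 - et) (D w)) (A * B * B)"
    using EB[of "1 - et"] ES1[of "2 - 2 * et"] EB1[of "1 - et"] ex by (intro T) (auto simp: nn)
  have t7: "IB ?M (\<lambda>D. wB s (s / e) (1 - et) (D v) * wB s s (1 - et) (D u) * wS s s (2 - 2 * et) (D w)) (A * B * B)"
    using EB[of "1 - et"] ES1[of "2 - 2 * et"] EB1[of "1 - et"] ex by (intro T) (auto simp: nn)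
  have t8: "IB ?M (\<lambda>D. wB s (s / e) 0 (D v) * wB s s 0 (D u) * wB s s 0 (D w)) (A * B * B)"
    using EB[of 0] EB1[of 0] ex by (intro T) (auto simp: nn)
  have all: "IB ?M (\<lambda>D. RS s e (D v) (D u) (D w)) (A * B * B + A * B * B + A * B * B + A * B * B + A * B * B + A * B * B + A * B * B + A * B * B)"
    unfolding RS_def by (intro IB_add t1 t2 t3 t4 t5 t6 t7 t8)
  hence all64: "IB ?M (\<lambda>D. 64 * RS s e (D v) (D u) (D w)) (64 * (A * B * B + A * B * B + A * B * B + A * B * B + A * B * B + A * B * B + A * B * B + A * B * B))"
    by (rule IB_cmult) simp
  have intL: "integrable ?M (\<lambda>D. indicator {k. real k < e * s \<or> real k > s / e} (D v) * psi3 s (real (D v)) (real (D u)) (real (D w)))"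
    by (rule int_bdd[where B = 1]) (auto simp: indicator_def psi3_nonneg psi3_le1 abs_le_iff
        intro: order.trans[OF _ psi3_le1])
  have "measure_pmf.expectation ?M (\<lambda>D. indicator {k. real k < e * s \<or> real k > s / e} (D v) * psi3 s (real (D v)) (real (D u)) (real (D w)))
      \<le> measure_pmf.expectation ?M (\<lambda>D. 64 * RS s e (D v) (D u) (D w))"
    by (rule integral_mono[OF intL]) (use all64 region_pw[OF spos e] in \<open>auto simp: IB_def\<close>)
  also have "\<dots> \<le> 64 * (A * B * B + A * B * B + A * B * B + A * B * B + A * B * B + A * B * B + A * B * B + A * B * B)"
    using all64 by (simp add: IB_def)
  also have "\<dots> = 512 * KK ^ 3 * e powr dl * G s ^ 3"
    by (simp add: A_def B_def power3_eq_cube mult_ac)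
  finally show ?thesis .
qed

end

lemma min_psi_le:
  assumes s: "s > 0" and l: "real l - 5 \<ge> s\<^sup>2 / 4" and a: "a' \<le> a + 1" and b: "b' \<le> b + 1"
  shows "min 1 (real a' * real b' / (real l - 5)) \<le> psi s (real a) (real b)"
proof -
  have lpos: "real l - 5 > 0" using l s by (smt (verit) zero_less_power divide_pos_pos)
  have "real a' * real b' \<le> (real a + 1) * (real b + 1)"
    using a b by (intro mult_mono) (auto simp flip: of_nat_Suc)
  hence "real a' * real b' / (real l - 5) \<le> (real a + 1) * (real b + 1) / (s\<^sup>2 / 4)"
    using lpos l s by (intro frac_le) auto
  also have "\<dots> = 4 * (real a + 1) * (real b + 1) / s\<^sup>2" by (simp add: field_simps)
  finally show ?thesis unfolding psi_def by linarith
qed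

lemma triple_le:
  fixes f :: "nat \<Rightarrow> nat \<Rightarrow> nat \<Rightarrow> real"
  assumes f: "\<And>i j k. i < j \<Longrightarrow> j < k \<Longrightarrow> k < n \<Longrightarrow> f i j k \<le> c" and c: "c \<ge> 0"
  shows "(\<Sum>i<n. \<Sum>j\<in>{i<..<n}. \<Sum>k\<in>{j<..<n}. f i j k) \<le> real n ^ 3 * c"
proof -
  have 1: "(\<Sum>k\<in>{j<..<n}. f i j k) \<le> real n * c" if "i < j" for i j
  proof -
    have "(\<Sum>k\<in>{j<..<n}. f i j k) \<le> (\<Sum>k\<in>{j<..<n}. c)" by (rule sum_mono) (use f that in auto)
    also have "\<dots> = real (card {j<..<n}) * c" by simp
    also have "\<dots> \<le> real n * c" by (intro mult_right_mono c) simp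
    finally show ?thesis .
  qed
  have 2: "(\<Sum>j\<in>{i<..<n}. \<Sum>k\<in>{j<..<n}. f i j k) \<le> real n * (real n * c)" for i
  proof -
    have "(\<Sum>j\<in>{i<..<n}. \<Sum>k\<in>{j<..<n}. f i j k) \<le> (\<Sum>j\<in>{i<..<n}. real n * c)" by (rule sum_mono) (rule 1, simp)
    also have "\<dots> = real (card {i<..<n}) * (real n * c)" by simp
    also have "\<dots> \<le> real n * (real n * c)" by (intro mult_right_mono) (use c in simp_all)
    finally show ?thesis .
  qed
  have "(\<Sum>i<n. \<Sum>j\<in>{i<..<n}. \<Sum>k\<in>{j<..<n}. f i j k) \<le> (\<Sum>i<n. real n * (real n * c))"
    by (rule sum_mono) (rule 2)
  also have "\<dots> = real n ^ 3 * c" by (simp add: power3_eq_cube)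
  finally show ?thesis .
qed

lemma Phi_bound:
  fixes \<mu> e :: real and n :: nat and d :: "nat \<Rightarrow> nat"
  assumes mun: "\<mu> * real n \<ge> 20" "\<mu> > 0"
  defines "s \<equiv> sqrt (\<mu> * real n)"
  shows "(\<Sum>m\<in>matchings (half_edges n d). tri_out \<mu> n e d m) / real (card (matchings (half_edges n d)))
    \<le> (\<Sum>i<n. \<Sum>j\<in>{i<..<n}. \<Sum>k\<in>{j<..<n}.
          (if real (d i) \<notin> Bn \<mu> n e \<or> real (d j) \<notin> Bn \<mu> n e \<or> real (d k) \<notin> Bn \<mu> n e then 1 else 0)
          * psi3 s (real (d i)) (real (d j)) (real (d k)))
      + real n ^ 3 * (if real (\<Sum>i<n. d i) < \<mu> * real n / 2 then 1 else 0)"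
proof -
  let ?M = "matchings (half_edges n d)"
  let ?O = "\<lambda>i j k. (if real (d i) \<notin> Bn \<mu> n e \<or> real (d j) \<notin> Bn \<mu> n e \<or> real (d k) \<notin> Bn \<mu> n e then 1 else 0::real)"
  let ?X = "\<lambda>m i j k. ecm_edge n d m i j * ecm_edge n d m j k * ecm_edge n d m i k"
  have cM: "real (card ?M) > 0" using matchings_half_edges_ne by (simp add: card_gt_0_iff)
  have s: "s > 0" using mun by (simp add: s_def)
  have s2: "s\<^sup>2 = \<mu> * real n" using mun by (simp add: s_def)
  have X01: "0 \<le> ?X m i j k" "?X m i j k \<le> 1" for m i j k
    using ecm_edge_01[of n d m i j] ecm_edge_01[of n d m j k] ecm_edge_01[of n d m i k] by auto
  have tri_eq: "tri_out \<mu> n e d m = (\<Sum>i<n. \<Sum>j\<in>{i<..<n}. \<Sum>k\<in>{j<..<n}. ?X m i j k * ?O i j k)" for m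
    by (simp add: tri_out_def)
  have swap: "(\<Sum>m\<in>?M. tri_out \<mu> n e d m) = (\<Sum>i<n. \<Sum>j\<in>{i<..<n}. \<Sum>k\<in>{j<..<n}. ?O i j k * (\<Sum>m\<in>?M. ?X m i j k))"
  proof -
    have "(\<Sum>m\<in>?M. tri_out \<mu> n e d m) = (\<Sum>m\<in>?M. \<Sum>i<n. \<Sum>j\<in>{i<..<n}. \<Sum>k\<in>{j<..<n}. ?X m i j k * ?O i j k)"
      by (simp add: tri_eq)
    also have "\<dots> = (\<Sum>i<n. \<Sum>m\<in>?M. \<Sum>j\<in>{i<..<n}. \<Sum>k\<in>{j<..<n}. ?X m i j k * ?O i j k)"
      by (rule sum.swap)
    also have "\<dots> = (\<Sum>i<n. \<Sum>j\<in>{i<..<n}. \<Sum>m\<in>?M. \<Sum>k\<in>{j<..<n}. ?X m i j k * ?O i j k)"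
      by (rule sum.cong[OF refl], rule sum.swap)
    also have "\<dots> = (\<Sum>i<n. \<Sum>j\<in>{i<..<n}. \<Sum>k\<in>{j<..<n}. \<Sum>m\<in>?M. ?X m i j k * ?O i j k)"
      by (rule sum.cong[OF refl], rule sum.cong[OF refl], rule sum.swap)
    also have "\<dots> = (\<Sum>i<n. \<Sum>j\<in>{i<..<n}. \<Sum>k\<in>{j<..<n}. ?O i j k * (\<Sum>m\<in>?M. ?X m i j k))"
      by (simp add: sum_distrib_left sum_distrib_right mult.commute)
    finally show ?thesis .
  qed
  define A where "A = (\<lambda>i j k. (\<Sum>m\<in>?M. ?X m i j k) / real (card ?M))"
  have avg_le1: "A i j k \<le> 1" for i j k
  proof -
    have "(\<Sum>m\<in>?M. ?X m i j k) \<le> (\<Sum>m\<in>?M. 1)" by (rule sum_mono) (rule X01(2))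
    thus ?thesis using cM by (simp add: A_def)
  qed
  have avg_ge0: "A i j k \<ge> 0" for i j k
    using X01(1) cM by (simp add: sum_nonneg A_def)
  have LHS: "(\<Sum>m\<in>?M. tri_out \<mu> n e d m) / real (card ?M)
     = (\<Sum>i<n. \<Sum>j\<in>{i<..<n}. \<Sum>k\<in>{j<..<n}. ?O i j k * A i j k)"
    unfolding swap sum_divide_distrib by (simp add: A_def)
  have psi3nn: "0 \<le> psi3 s (real (d i)) (real (d j)) (real (d k))" for i j k by (simp add: psi3_nonneg)
  have S0: "0 \<le> (\<Sum>i<n. \<Sum>j\<in>{i<..<n}. \<Sum>k\<in>{j<..<n}. ?O i j k * psi3 s (real (d i)) (real (d j)) (real (d k)))"
    by (intro sum_nonneg) (simp add: psi3nn)
  show ?thesis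
  proof (cases "real (\<Sum>i<n. d i) < \<mu> * real n / 2")
    case True
    have "(\<Sum>m\<in>?M. tri_out \<mu> n e d m) / real (card ?M) \<le> (\<Sum>i<n. \<Sum>j\<in>{i<..<n}. \<Sum>k\<in>{j<..<n}. (1::real))"
      unfolding LHS by (intro sum_mono) (use avg_le1 avg_ge0 in \<open>auto intro: mult_le_one\<close>)
    also have "\<dots> \<le> real n ^ 3 * 1" by (rule triple_le) auto
    finally show ?thesis using True S0 by simp
  next
    case False
    let ?l = "card (half_edges n d)"
    have "real ?l \<ge> real (\<Sum>i<n. d i)" using sum_le_card_half_edges[where n=n and d=d] by linarith
    hence l: "real ?l - 5 \<ge> s\<^sup>2 / 4" using False mun s2 by linarith
    have l6: "?l \<ge> 6" using l s2 mun by linarith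
    have lp: "real ?l - 5 > 0" using l6 by simp
    have "(\<Sum>m\<in>?M. tri_out \<mu> n e d m) / real (card ?M)
        \<le> (\<Sum>i<n. \<Sum>j\<in>{i<..<n}. \<Sum>k\<in>{j<..<n}. ?O i j k * psi3 s (real (d i)) (real (d j)) (real (d k)))"
      unfolding LHS
    proof (intro sum_mono mult_left_mono)
      fix i j k assume i: "i \<in> {..<n}" and j: "j \<in> {i<..<n}" and k: "k \<in> {j<..<n}"
      have "A i j k
          \<le> min 1 (real (deg_ext n d i) * real (deg_ext n d j) / (real ?l - 5)) *
             min 1 (real (deg_ext n d j) * real (deg_ext n d k) / (real ?l - 5)) *
             min 1 (real (deg_ext n d i) * real (deg_ext n d k) / (real ?l - 5))"
        unfolding A_def by (rule tri_bound) (use i j k l6 in auto)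
      also have "\<dots> \<le> psi s (real (d i)) (real (d j)) * psi s (real (d j)) (real (d k)) * psi s (real (d i)) (real (d k))"
        by (intro mult_mono min_psi_le[OF s l] deg_ext_le psi_nonneg mult_nonneg_nonneg)
           (use lp in \<open>auto intro!: divide_nonneg_pos\<close>)
      finally show "A i j k \<le> psi3 s (real (d i)) (real (d j)) (real (d k))"
        by (simp add: psi3_def)
    qed simp
    thus ?thesis using False by simp
  qed
qed

lemma cm_exp:
  fixes F :: "(nat \<Rightarrow> nat) \<Rightarrow> (nat \<times> nat \<Rightarrow> nat \<times> nat) \<Rightarrow> real"
  assumes nn: "\<And>d m. 0 \<le> F d m" and bd: "\<And>d m. F d m \<le> B"
  shows "measure_pmf.expectation (cm_model n p) (\<lambda>(d, m). F d m) =
    measure_pmf.expectation (Pi_pmf {..<n} 0 (\<lambda>_. p))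
      (\<lambda>d. (\<Sum>m\<in>matchings (half_edges n d). F d m) / real (card (matchings (half_edges n d))))"
proof -
  define Phi where "Phi = (\<lambda>d. (\<Sum>m\<in>matchings (half_edges n d). F d m) / real (card (matchings (half_edges n d))))"
  have cM: "real (card (matchings (half_edges n d))) > 0" for d
    using matchings_half_edges_ne by (simp add: card_gt_0_iff)
  have Phi0: "Phi d \<ge> 0" for d using nn cM by (simp add: Phi_def sum_nonneg)
  have PhiB: "Phi d \<le> B" for d
  proof -
    have "(\<Sum>m\<in>matchings (half_edges n d). F d m) \<le> (\<Sum>m\<in>matchings (half_edges n d). B)" by (rule sum_mono) (rule bd)
    thus ?thesis using cM[of d] by (simp add: Phi_def field_simps)
  qed
  have B0: "B \<ge> 0" using nn[of undefined undefined] bd[of undefined undefined] by linarith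
  have inner: "(\<integral>\<^sup>+ m. ennreal (F d m) \<partial>measure_pmf (pmf_of_set (matchings (half_edges n d)))) = ennreal (Phi d)" for d
  proof -
    have "(\<integral>\<^sup>+ m. ennreal (F d m) \<partial>measure_pmf (pmf_of_set (matchings (half_edges n d))))
        = ennreal (measure_pmf.expectation (pmf_of_set (matchings (half_edges n d))) (F d))"
      by (rule nn_integral_eq_integral) (auto intro!: int_bdd[where B = B] simp: nn abs_of_nonneg bd)
    also have "measure_pmf.expectation (pmf_of_set (matchings (half_edges n d))) (F d) = Phi d"
      unfolding Phi_def by (rule integral_pmf_of_set[OF matchings_half_edges_ne finite_matchings_half_edges])
    finally show ?thesis .
  qed
  have "ennreal (measure_pmf.expectation (cm_model n p) (\<lambda>(d, m). F d m))
      = (\<integral>\<^sup>+ x. ennreal ((\<lambda>(d, m). F d m) x) \<partial>measure_pmf (cm_model n p))"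
    by (rule nn_integral_eq_integral[symmetric]) (auto intro!: int_bdd[where B = B] simp: nn abs_of_nonneg bd split: prod.splits)
  also have "\<dots> = (\<integral>\<^sup>+ d. (\<integral>\<^sup>+ m. ennreal (F d m) \<partial>measure_pmf (pmf_of_set (matchings (half_edges n d)))) \<partial>measure_pmf (Pi_pmf {..<n} 0 (\<lambda>_. p)))"
    by (simp add: cm_model_def)
  also have "\<dots> = (\<integral>\<^sup>+ d. ennreal (Phi d) \<partial>measure_pmf (Pi_pmf {..<n} 0 (\<lambda>_. p)))"
    by (simp add: inner)
  also have "\<dots> = ennreal (measure_pmf.expectation (Pi_pmf {..<n} 0 (\<lambda>_. p)) Phi)"
    by (rule nn_integral_eq_integral) (auto intro!: int_bdd[where B = B] simp: Phi0 abs_of_nonneg PhiB)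
  finally have "ennreal (measure_pmf.expectation (cm_model n p) (\<lambda>(d, m). F d m)) = ennreal (measure_pmf.expectation (Pi_pmf {..<n} 0 (\<lambda>_. p)) Phi)" .
  moreover have "measure_pmf.expectation (cm_model n p) (\<lambda>(d, m). F d m) \<ge> 0"
    by (intro Bochner_Integration.integral_nonneg) (auto simp: nn split: prod.splits)
  moreover have "measure_pmf.expectation (Pi_pmf {..<n} 0 (\<lambda>_. p)) Phi \<ge> 0"
    by (intro Bochner_Integration.integral_nonneg) (auto simp: Phi0)
  ultimately show ?thesis by (simp add: Phi_def)
qed

lemma exp_triple_sum:
  fixes g :: "nat \<Rightarrow> nat \<Rightarrow> nat \<Rightarrow> 'a \<Rightarrow> real"
  assumes "\<And>i j k. integrable (measure_pmf M) (g i j k)"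
  shows "measure_pmf.expectation M (\<lambda>x. \<Sum>i<n. \<Sum>j\<in>{i<..<n}. \<Sum>k\<in>{j<..<n}. g i j k x)
    = (\<Sum>i<n. \<Sum>j\<in>{i<..<n}. \<Sum>k\<in>{j<..<n}. measure_pmf.expectation M (g i j k))"
  using assms by (simp add: Bochner_Integration.integral_sum Bochner_Integration.integrable_sum)

context lsetup
begin

lemma En_bound:
  fixes n :: nat and e :: real
  assumes e: "0 < e" "e < 1" and mun: "\<mu> * real n \<ge> 20" and mupos: "\<mu> > 0"
    and es: "e * sqrt (\<mu> * real n) \<ge> y1"
  shows "measure_pmf.expectation (cm_model n p) (\<lambda>(d, m). tri_out \<mu> n e d m)
    \<le> real n ^ 3 * (1536 * KK ^ 3 * e powr dl * G (sqrt (\<mu> * real n)) ^ 3)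
      + real n ^ 3 * measure_pmf.prob (Pi_pmf {..<n} 0 (\<lambda>_. p)) {d. real (\<Sum>i<n. d i) < \<mu> * real n / 2}"
proof -
  define s where "s = sqrt (\<mu> * real n)"
  let ?M = "Pi_pmf {..<n} 0 (\<lambda>_. p)"
  let ?O = "\<lambda>d i j k. (if real (d i) \<notin> Bn \<mu> n e \<or> real (d j) \<notin> Bn \<mu> n e \<or> real (d k) \<notin> Bn \<mu> n e then 1 else 0::real)"
  let ?I = "\<lambda>x. indicator {k. real k < e * s \<or> real k > s / e} x :: real"
  have spos: "s > 0" using mun mupos by (simp add: s_def)
  have trib: "0 \<le> tri_out \<mu> n e d m \<and> tri_out \<mu> n e d m \<le> real n ^ 3" for d m
  proof
    have Xn: "0 \<le> ecm_edge n d m i j * ecm_edge n d m j k * ecm_edge n d m i k" for i j k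
      using ecm_edge_01[of n d m i j] ecm_edge_01[of n d m j k] ecm_edge_01[of n d m i k] by auto
    have X1: "ecm_edge n d m i j * ecm_edge n d m j k * ecm_edge n d m i k \<le> 1" for i j k
      using ecm_edge_01[of n d m i j] ecm_edge_01[of n d m j k] ecm_edge_01[of n d m i k] by auto
    show "0 \<le> tri_out \<mu> n e d m" unfolding tri_out_def by (intro sum_nonneg) (simp add: Xn)
    have "tri_out \<mu> n e d m \<le> real n ^ 3 * 1" unfolding tri_out_def by (rule triple_le) (use Xn X1 in auto)
    thus "tri_out \<mu> n e d m \<le> real n ^ 3" by simp
  qed
  have step1: "measure_pmf.expectation (cm_model n p) (\<lambda>(d, m). tri_out \<mu> n e d m) =
    measure_pmf.expectation ?M (\<lambda>d. (\<Sum>m\<in>matchings (half_edges n d). tri_out \<mu> n e d m) / real (card (matchings (half_edges n d))))"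
    by (rule cm_exp[where B = "real n ^ 3"]) (use trib in auto)
  define R where "R = (\<lambda>d. (\<Sum>i<n. \<Sum>j\<in>{i<..<n}. \<Sum>k\<in>{j<..<n}. ?O d i j k * psi3 s (real (d i)) (real (d j)) (real (d k)))
      + real n ^ 3 * (if real (\<Sum>i<n. d i) < \<mu> * real n / 2 then 1 else 0))"
  have psi3b: "0 \<le> psi3 s (real a) (real b) (real c)" "psi3 s (real a) (real b) (real c) \<le> 1" for a b c
    by (simp_all add: psi3_nonneg psi3_le1)
  have intOP: "integrable ?M (\<lambda>d. ?O d i j k * psi3 s (real (d i)) (real (d j)) (real (d k)))" for i j k
    by (rule int_bdd[where B = 1]) (use psi3b in \<open>auto simp: abs_le_iff\<close>)
  have intbad: "integrable ?M (\<lambda>d. real n ^ 3 * (if real (\<Sum>i<n. d i) < \<mu> * real n / 2 then 1 else 0))"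
    by (rule int_bdd[where B = "real n ^ 3"]) auto
  have intR: "integrable ?M R"
    unfolding R_def by (intro Bochner_Integration.integrable_add Bochner_Integration.integrable_sum intOP intbad)
  have intPhi: "integrable ?M (\<lambda>d. (\<Sum>m\<in>matchings (half_edges n d). tri_out \<mu> n e d m) / real (card (matchings (half_edges n d))))"
  proof (rule int_bdd[where B = "real n ^ 3"])
    fix d
    have cM: "real (card (matchings (half_edges n d))) > 0"
      using matchings_half_edges_ne by (simp add: card_gt_0_iff)
    have "(\<Sum>m\<in>matchings (half_edges n d). tri_out \<mu> n e d m) \<le> (\<Sum>m\<in>matchings (half_edges n d). real n ^ 3)"
      by (rule sum_mono) (use trib in auto)
    moreover have "0 \<le> (\<Sum>m\<in>matchings (half_edges n d). tri_out \<mu> n e d m)" by (rule sum_nonneg) (use trib in auto)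
    ultimately show "\<bar>(\<Sum>m\<in>matchings (half_edges n d). tri_out \<mu> n e d m) / real (card (matchings (half_edges n d)))\<bar> \<le> real n ^ 3"
      using cM by (simp add: field_simps)
  qed
  have step2: "measure_pmf.expectation ?M (\<lambda>d. (\<Sum>m\<in>matchings (half_edges n d). tri_out \<mu> n e d m) / real (card (matchings (half_edges n d))))
      \<le> measure_pmf.expectation ?M R"
    by (rule integral_mono[OF intPhi intR]) (unfold R_def s_def, rule Phi_bound[OF mun mupos])
  have ER: "measure_pmf.expectation ?M R = (\<Sum>i<n. \<Sum>j\<in>{i<..<n}. \<Sum>k\<in>{j<..<n}.
        measure_pmf.expectation ?M (\<lambda>d. ?O d i j k * psi3 s (real (d i)) (real (d j)) (real (d k))))
      + real n ^ 3 * measure_pmf.prob ?M {d. real (\<Sum>i<n. d i) < \<mu> * real n / 2}"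
  proof -
    have "measure_pmf.expectation ?M R = measure_pmf.expectation ?M (\<lambda>d. \<Sum>i<n. \<Sum>j\<in>{i<..<n}. \<Sum>k\<in>{j<..<n}. ?O d i j k * psi3 s (real (d i)) (real (d j)) (real (d k)))
       + measure_pmf.expectation ?M (\<lambda>d. real n ^ 3 * (if real (\<Sum>i<n. d i) < \<mu> * real n / 2 then 1 else 0))"
      unfolding R_def by (intro Bochner_Integration.integral_add Bochner_Integration.integrable_sum intOP intbad)
    also have "measure_pmf.expectation ?M (\<lambda>d. \<Sum>i<n. \<Sum>j\<in>{i<..<n}. \<Sum>k\<in>{j<..<n}. ?O d i j k * psi3 s (real (d i)) (real (d j)) (real (d k)))
      = (\<Sum>i<n. \<Sum>j\<in>{i<..<n}. \<Sum>k\<in>{j<..<n}. measure_pmf.expectation ?M (\<lambda>d. ?O d i j k * psi3 s (real (d i)) (real (d j)) (real (d k))))"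
      by (rule exp_triple_sum) (rule intOP)
    also have "(\<lambda>d. real n ^ 3 * (if real (\<Sum>i<n. d i) < \<mu> * real n / 2 then 1 else 0))
        = (\<lambda>d. real n ^ 3 * indicator {d. real (\<Sum>i<n. d i) < \<mu> * real n / 2} d)"
      by (auto simp: indicator_def)
    also have "measure_pmf.expectation ?M \<dots> = real n ^ 3 * measure_pmf.prob ?M {d. real (\<Sum>i<n. d i) < \<mu> * real n / 2}"
      by (rule exp_ind)
    finally show ?thesis .
  qed
  have each: "measure_pmf.expectation ?M (\<lambda>d. ?O d i j k * psi3 s (real (d i)) (real (d j)) (real (d k)))
      \<le> 1536 * (KK ^ 3 * e powr dl * G s ^ 3)" if ijk: "i < j" "j < k" "k < n" for i j k
  proof -
    have Bn_iff: "real x \<notin> Bn \<mu> n e \<longleftrightarrow> real x < e * s \<or> real x > s / e" for x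
      by (auto simp: Bn_def s_def)
    have pw: "?O d i j k * psi3 s (real (d i)) (real (d j)) (real (d k))
       \<le> ?I (d i) * psi3 s (real (d i)) (real (d j)) (real (d k))
        + ?I (d j) * psi3 s (real (d j)) (real (d i)) (real (d k))
        + ?I (d k) * psi3 s (real (d k)) (real (d i)) (real (d j))" for d
    proof -
      have e1: "psi3 s (real (d j)) (real (d i)) (real (d k)) = psi3 s (real (d i)) (real (d j)) (real (d k))"
        by (rule psi3_perm(1)[symmetric])
      have e2: "psi3 s (real (d k)) (real (d i)) (real (d j)) = psi3 s (real (d i)) (real (d j)) (real (d k))"
        by (metis psi3_perm(2))
      show ?thesis unfolding e1 e2 using psi3b[of "d i" "d j" "d k"]
        by (auto simp: indicator_def Bn_iff distrib_right[symmetric])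
    qed
    have intI: "integrable ?M (\<lambda>d. ?I (d a) * psi3 s (real (d a)) (real (d b)) (real (d c)))" for a b c
      by (rule int_bdd[where B = 1]) (use psi3b in \<open>auto simp: abs_le_iff indicator_def\<close>)
    have E1: "measure_pmf.expectation ?M (\<lambda>d. ?I (d a) * psi3 s (real (d a)) (real (d b)) (real (d c))) \<le> 512 * (KK ^ 3 * e powr dl * G s ^ 3)"
      if "a < n" "b < n" "c < n" "a \<noteq> b" "a \<noteq> c" "b \<noteq> c" for a b c
      using Eout[OF that e, of s] es by (simp add: s_def mult.assoc)
    have "measure_pmf.expectation ?M (\<lambda>d. ?O d i j k * psi3 s (real (d i)) (real (d j)) (real (d k)))
       \<le> measure_pmf.expectation ?M (\<lambda>d. ?I (d i) * psi3 s (real (d i)) (real (d j)) (real (d k))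
        + ?I (d j) * psi3 s (real (d j)) (real (d i)) (real (d k))
        + ?I (d k) * psi3 s (real (d k)) (real (d i)) (real (d j)))"
      by (rule integral_mono[OF intOP _ pw]) (intro Bochner_Integration.integrable_add intI)
    also have "\<dots> = measure_pmf.expectation ?M (\<lambda>d. ?I (d i) * psi3 s (real (d i)) (real (d j)) (real (d k)))
        + measure_pmf.expectation ?M (\<lambda>d. ?I (d j) * psi3 s (real (d j)) (real (d i)) (real (d k)))
        + measure_pmf.expectation ?M (\<lambda>d. ?I (d k) * psi3 s (real (d k)) (real (d i)) (real (d j)))"
      by (simp add: Bochner_Integration.integral_add intI)
    also have "\<dots> \<le> 512 * (KK ^ 3 * e powr dl * G s ^ 3) + 512 * (KK ^ 3 * e powr dl * G s ^ 3) + 512 * (KK ^ 3 * e powr dl * G s ^ 3)"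
      by (intro add_mono E1) (use ijk in auto)
    finally show ?thesis by linarith
  qed
  have "(\<Sum>i<n. \<Sum>j\<in>{i<..<n}. \<Sum>k\<in>{j<..<n}.
        measure_pmf.expectation ?M (\<lambda>d. ?O d i j k * psi3 s (real (d i)) (real (d j)) (real (d k))))
      \<le> real n ^ 3 * (1536 * (KK ^ 3 * e powr dl * G s ^ 3))"
    by (rule triple_le) (use each KK_pos G_nonneg in auto)
  moreover have "1536 * (KK ^ 3 * e powr dl * G s ^ 3) = 1536 * KK ^ 3 * e powr dl * G (sqrt (\<mu> * real n)) ^ 3"
    by (simp add: s_def mult.assoc)
  ultimately show ?thesis using step1 step2 ER by (simp add: s_def)
qed

end

context lsetup
begin

lemma int_real: "integrable p (\<lambda>d. real d)"
proof -
  have q: "(0::real) \<le> 1" "1 \<le> \<gamma> - 2 * dl" using dl_le2 gam1 by (auto simp: field_simps)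
  have "1 \<le> \<gamma> - 2 * dl"
  proof -
    have "4 * dl \<le> \<gamma> - 1" using dl_le2 by simp
    thus ?thesis using dl_pos by linarith
  qed
  hence m: "integrable p (\<lambda>d. real d powr 1 * indicator {k. real k > x0} d)"
    using M2[of 1 x0] by simp
  have m': "integrable p (\<lambda>d. real d * indicator {k. real k > x0} d)"
    using m by simp
  have b: "integrable p (\<lambda>d. real d * indicator {k. \<not> real k > x0} d)"
    by (rule int_bdd[where B = x0]) (use x0_ge1 in \<open>auto simp: indicator_def\<close>)
  have "integrable p (\<lambda>d. real d * indicator {k. real k > x0} d + real d * indicator {k. \<not> real k > x0} d)"
    using m' b by simp
  moreover have "(\<lambda>d. real d * indicator {k. real k > x0} d + real d * indicator {k. \<not> real k > x0} d) = (\<lambda>d. real d)"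
    by (auto simp: indicator_def)
  ultimately show ?thesis by simp
qed

lemma mu_pos: "\<mu> > 0"
proof -
  have "G 0 = measure_pmf.expectation p (indicator {k. real k > 0})"
    by (simp add: G_def)
  also have "\<dots> \<le> measure_pmf.expectation p (\<lambda>d. real d)"
    by (rule integral_mono) (auto intro: int_real int_bdd[where B = 1] simp: indicator_def)
  finally show ?thesis using G_pos[of 0] mu by simp
qed

lemma trunc_mean: "\<exists>K::real. K > 0 \<and> measure_pmf.expectation p (\<lambda>d. min (real d) K) \<ge> 3 / 4 * \<mu>"
proof -
  have lim: "(\<lambda>i::nat. measure_pmf.expectation p (\<lambda>d. min (real d) (real i))) \<longlonglongrightarrow> measure_pmf.expectation p (\<lambda>d. real d)"
  proof (rule integral_dominated_convergence[where w = "\<lambda>d. real d"])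
    show "integrable p (\<lambda>d. real d)" by (rule int_real)
    show "AE x in measure_pmf p. (\<lambda>i. min (real x) (real i)) \<longlonglongrightarrow> real x"
    proof (rule AE_I2)
      fix x :: nat
      have "eventually (\<lambda>i. min (real x) (real i) = real x) sequentially"
        by (rule eventually_sequentiallyI[of x]) simp
      thus "(\<lambda>i. min (real x) (real i)) \<longlonglongrightarrow> real x" by (rule tendsto_eventually)
    qed
    show "AE x in measure_pmf p. norm (min (real x) (real i)) \<le> real x" for i by auto
  qed auto
  have "3 / 4 * \<mu> < \<mu>" using mu_pos by simp
  moreover have lim': "(\<lambda>i::nat. measure_pmf.expectation p (\<lambda>d. min (real d) (real i))) \<longlonglongrightarrow> \<mu>"
    using lim mu by simp
  ultimately have "eventually (\<lambda>i. measure_pmf.expectation p (\<lambda>d. min (real d) (real i)) > 3 / 4 * \<mu>) sequentially"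
    using order_tendstoD(1) by blast
  moreover have "eventually (\<lambda>i::nat. i \<ge> 1) sequentially" by (rule eventually_ge_at_top)
  ultimately obtain i :: nat where "measure_pmf.expectation p (\<lambda>d. min (real d) (real i)) > 3 / 4 * \<mu>" "i \<ge> 1"
    using eventually_conj eventually_happens' by (metis (mono_tags, lifting) eventually_sequentially order.refl)
  thus ?thesis by (intro exI[of _ "real i"]) auto
qed

lemma bad_bound:
  "\<exists>c>0. \<forall>n\<ge>1. measure_pmf.prob (Pi_pmf {..<n} 0 (\<lambda>_. p)) {d. real (\<Sum>i<n. d i) < \<mu> * real n / 2} \<le> exp (- c * real n)"
proof -
  obtain K :: real where K: "K > 0" "measure_pmf.expectation p (\<lambda>d. min (real d) K) \<ge> 3 / 4 * \<mu>"
    using trunc_mean by blast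
  define c where "c = \<mu>\<^sup>2 / (8 * K\<^sup>2)"
  have cpos: "c > 0" using K mu_pos by (simp add: c_def)
  have "measure_pmf.prob (Pi_pmf {..<n} 0 (\<lambda>_. p)) {d. real (\<Sum>i<n. d i) < \<mu> * real n / 2} \<le> exp (- c * real n)"
    if n: "n \<ge> 1" for n
  proof -
    let ?M = "Pi_pmf {..<n} 0 (\<lambda>_. p)"
    define X where "X = (\<lambda>i (d :: nat \<Rightarrow> nat). min (real (d i)) K)"
    define mH where "mH = (\<Sum>i<n. measure_pmf.expectation ?M (X i))"
    have EX: "measure_pmf.expectation ?M (X i) = measure_pmf.expectation p (\<lambda>d. min (real d) K)" if "i < n" for i
    proof -
      have "measure_pmf.expectation ?M (X i) = measure_pmf.expectation (map_pmf (\<lambda>f. f i) ?M) (\<lambda>d. min (real d) K)"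
        by (simp add: X_def)
      also have "map_pmf (\<lambda>f. f i) ?M = p" using that by (simp add: Pi_pmf_component)
      finally show ?thesis .
    qed
    have mH: "mH \<ge> 3 / 4 * \<mu> * real n"
    proof -
      have "mH = real n * measure_pmf.expectation p (\<lambda>d. min (real d) K)" by (simp add: mH_def EX)
      thus ?thesis using K n by (simp add: mult.commute)
    qed
    interpret H: Hoeffding_ineq "measure_pmf ?M" "{..<n}" X "\<lambda>_. 0" "\<lambda>_. K" mH
    proof unfold_locales
      show "finite {..<n}" by simp
      have "prob_space.indep_vars (measure_pmf ?M) (\<lambda>_. count_space UNIV) (\<lambda>x f. f x) {..<n}"
        by (rule indep_vars_Pi_pmf) simp
      from prob_space.indep_vars_compose2[OF prob_space_measure_pmf this, of "\<lambda>_ k. min (real k) K" "\<lambda>_. borel"]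
      show "prob_space.indep_vars (measure_pmf ?M) (\<lambda>_. borel) X {..<n}" by (simp add: X_def)
      show "AE x in measure_pmf ?M. X i x \<in> {0..K}" for i using K by (auto simp: X_def)
    qed (simp add: mH_def)
    have "measure_pmf.prob ?M {d. real (\<Sum>i<n. d i) < \<mu> * real n / 2}
        \<le> measure_pmf.prob ?M {x \<in> space (measure_pmf ?M). (\<Sum>i<n. X i x) \<le> mH - \<mu> * real n / 4}"
    proof (rule measure_pmf.finite_measure_mono)
      show "{d. real (\<Sum>i<n. d i) < \<mu> * real n / 2} \<subseteq> {x \<in> space (measure_pmf ?M). (\<Sum>i<n. X i x) \<le> mH - \<mu> * real n / 4}"
      proof safe
        fix d :: "nat \<Rightarrow> nat" assume d: "real (\<Sum>i<n. d i) < \<mu> * real n / 2"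
        have "(\<Sum>i<n. X i d) \<le> (\<Sum>i<n. real (d i))" by (intro sum_mono) (simp add: X_def)
        also have "\<dots> = real (\<Sum>i<n. d i)" by simp
        finally show "(\<Sum>i<n. X i d) \<le> mH - \<mu> * real n / 4" using d mH by linarith
      qed simp
    qed simp
    also have "\<dots> \<le> exp (- 2 * (\<mu> * real n / 4)\<^sup>2 / (\<Sum>i<n. (K - 0)\<^sup>2))"
      by (rule H.Hoeffding_ineq_le) (use mu_pos K n in auto)
    also have "- 2 * (\<mu> * real n / 4)\<^sup>2 / (\<Sum>i<n. (K - 0)\<^sup>2) = - c * real n"
      using K n by (simp add: c_def power2_eq_square field_simps)
    finally show ?thesis .
  qed
  thus ?thesis using cpos by blast
qed

end

lemma pow4_exp_lim:
  fixes c :: real assumes c: "c > 0"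
  shows "(\<lambda>n::nat. real n ^ 4 * exp (- c * real n)) \<longlonglongrightarrow> 0"
proof -
  have f: "filterlim (\<lambda>n::nat. c * real n) at_top sequentially"
    by (rule filterlim_tendsto_pos_mult_at_top[OF tendsto_const c filterlim_real_sequentially])
  have "(\<lambda>n::nat. (c * real n) ^ 4 / exp (c * real n)) \<longlonglongrightarrow> 0"
    by (rule filterlim_compose[OF tendsto_power_div_exp_0 f])
  hence "(\<lambda>n::nat. (c * real n) ^ 4 / exp (c * real n) / c ^ 4) \<longlonglongrightarrow> 0 / c ^ 4"
    by (intro tendsto_divide tendsto_const) (use c in auto)
  moreover have "(\<lambda>n::nat. (c * real n) ^ 4 / exp (c * real n) / c ^ 4) = (\<lambda>n. real n ^ 4 * exp (- c * real n))"
    using c by (auto simp: exp_minus field_simps power_mult_distrib)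
  ultimately show ?thesis by simp
qed

context lsetup
begin

definition AA :: real where "AA = 1536 * KK ^ 3 * \<mu> powr (- 3 * \<gamma> / 2)"

lemma AA_pos: "AA > 0" using KK_pos mu_pos by (simp add: AA_def)

lemma ratio_eventually:
  assumes e: "0 < e" "e < 1"
  shows "eventually (\<lambda>n. measure_pmf.expectation (cm_model n p) (\<lambda>(d, m). tri_out \<mu> n e d m)
                      / (L (sqrt (\<mu> * real n)) ^ 3 * real n powr (3 / 2 * (2 - \<gamma>))) \<le> 2 * AA * e powr dl) sequentially"
proof -
  obtain c where c: "c > 0" "\<And>n. n \<ge> 1 \<Longrightarrow> measure_pmf.prob (Pi_pmf {..<n} 0 (\<lambda>_. p)) {d. real (\<Sum>i<n. d i) < \<mu> * real n / 2} \<le> exp (- c * real n)"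
    using bad_bound by blast
  have mp: "\<mu> > 0" by (rule mu_pos)
  have evR: "\<And>B. eventually (\<lambda>n::nat. real n \<ge> B) sequentially"
    using filterlim_real_sequentially unfolding filterlim_at_top by blast
  define T where "T = AA * e powr dl * cL ^ 3 / \<mu>"
  have Tpos: "T > 0" using AA_pos cL_pos mp e by (simp add: T_def)
  have ev4: "eventually (\<lambda>n::nat. real n ^ 4 * exp (- c * real n) < T) sequentially"
    using order_tendstoD(2)[OF pow4_exp_lim[OF c(1)] Tpos] .
  have "eventually (\<lambda>n::nat. real n \<ge> 1 \<and> real n \<ge> 20 / \<mu> \<and> real n \<ge> (y1 / e)\<^sup>2 / \<mu> \<and> real n \<ge> 1 / \<mu>
      \<and> real n ^ 4 * exp (- c * real n) < T) sequentially"
    by (intro eventually_conj evR ev4)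
  thus ?thesis
  proof (rule eventually_mono)
    fix n :: nat
    assume H: "real n \<ge> 1 \<and> real n \<ge> 20 / \<mu> \<and> real n \<ge> (y1 / e)\<^sup>2 / \<mu> \<and> real n \<ge> 1 / \<mu> \<and> real n ^ 4 * exp (- c * real n) < T"
    define s where "s = sqrt (\<mu> * real n)"
    have n1: "n \<ge> 1" using H by simp
    have npos: "real n > 0" using H by simp
    have mun: "\<mu> * real n \<ge> 20" using H mp by (simp add: field_simps)
    have mun1: "\<mu> * real n \<ge> 1" using H mp by (simp add: field_simps)
    have "(y1 / e)\<^sup>2 / \<mu> \<le> real n" using H by simp
    hence "\<mu> * real n \<ge> (y1 / e)\<^sup>2" using mp by (simp add: pos_divide_le_eq mult.commute)
    hence "s \<ge> sqrt ((y1 / e)\<^sup>2)" unfolding s_def by (rule real_sqrt_le_mono)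
    hence "s \<ge> y1 / e" using y1_ge e by simp
    hence es: "e * s \<ge> y1" using e by (simp add: field_simps)
    have spos: "s > 0" using mun by (simp add: s_def)
    have es1: "e * s \<le> s" using e spos by simp
    have sx: "s \<ge> x0" using es es1 y1_ge by linarith
    have s1: "s \<ge> 1" using sx x0_ge1 by linarith
    have sle: "s \<le> \<mu> * real n"
    proof -
      have "s = sqrt (\<mu> * real n)" by (simp add: s_def)
      also have "\<dots> \<le> sqrt ((\<mu> * real n)\<^sup>2)"
      proof (rule real_sqrt_le_mono)
        have "\<mu> * real n * 1 \<le> \<mu> * real n * (\<mu> * real n)" using mun1 by (intro mult_left_mono) auto
        thus "\<mu> * real n \<le> (\<mu> * real n)\<^sup>2" by (simp add: power2_eq_square)
      qed
      also have "\<dots> = \<mu> * real n" using mun1 by simp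
      finally show ?thesis .
    qed
    define Den where "Den = L s ^ 3 * real n powr (3 / 2 * (2 - \<gamma>))"
    have Ls: "L s = G s * s powr \<gamma>" using spos by (simp add: L_eq)
    have Gs: "G s > 0" by (rule G_pos)
    have Lpos: "L s > 0" using Ls Gs spos by simp
    have npow: "real n powr (3 / 2 * (2 - \<gamma>)) \<ge> 1" using n1 gam2 by (intro ge_one_powr_ge_zero) auto
    have Denpos: "Den > 0" unfolding Den_def using Lpos npow n1 by (intro mult_pos_pos) auto
    have En: "measure_pmf.expectation (cm_model n p) (\<lambda>(d, m). tri_out \<mu> n e d m)
      \<le> real n ^ 3 * (1536 * KK ^ 3 * e powr dl * G s ^ 3) + real n ^ 3 * exp (- c * real n)"
    proof -
      have "measure_pmf.expectation (cm_model n p) (\<lambda>(d, m). tri_out \<mu> n e d m)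
        \<le> real n ^ 3 * (1536 * KK ^ 3 * e powr dl * G s ^ 3)
          + real n ^ 3 * measure_pmf.prob (Pi_pmf {..<n} 0 (\<lambda>_. p)) {d. real (\<Sum>i<n. d i) < \<mu> * real n / 2}"
        using En_bound[OF e mun mp] es by (simp add: s_def)
      also have "\<dots> \<le> real n ^ 3 * (1536 * KK ^ 3 * e powr dl * G s ^ 3) + real n ^ 3 * exp (- c * real n)"
        using c(2)[OF n1] by (intro add_left_mono mult_left_mono) auto
      finally show ?thesis .
    qed
    have main: "real n ^ 3 * (1536 * KK ^ 3 * e powr dl * G s ^ 3) / Den = AA * e powr dl"
    proof -
      have s3: "s powr (3 * \<gamma>) = \<mu> powr (3 * \<gamma> / 2) * real n powr (3 * \<gamma> / 2)"
      proof -
        have "s = (\<mu> * real n) powr (1 / 2)" using mun by (simp add: s_def sqrt_def powr_half_sqrt)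
        hence "s powr (3 * \<gamma>) = (\<mu> * real n) powr (3 * \<gamma> / 2)" using mun by (simp add: powr_powr)
        also have "\<dots> = \<mu> powr (3 * \<gamma> / 2) * real n powr (3 * \<gamma> / 2)" by (rule powr_mult)
        finally show ?thesis .
      qed
      have n3: "real n powr (3 * \<gamma> / 2) * real n powr (3 / 2 * (2 - \<gamma>)) = real n ^ 3"
      proof -
        have ex3: "3 * \<gamma> / 2 + 3 / 2 * (2 - \<gamma>) = 3" by (simp add: field_simps)
        have "real n powr (3 * \<gamma> / 2) * real n powr (3 / 2 * (2 - \<gamma>)) = real n powr (3 * \<gamma> / 2 + 3 / 2 * (2 - \<gamma>))"
          by (rule powr_add[symmetric])
        also have "\<dots> = real n powr 3" by (simp only: ex3)
        also have "\<dots> = real n ^ 3" using npos by (simp add: powr_realpow)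
        finally show ?thesis .
      qed
      have L3: "L s ^ 3 = G s ^ 3 * s powr (3 * \<gamma>)"
        using Ls spos by (simp add: power_mult_distrib powr_realpow[symmetric] powr_powr mult.commute)
      have "Den = G s ^ 3 * \<mu> powr (3 * \<gamma> / 2) * real n ^ 3"
        unfolding Den_def L3 s3 using n3 by (simp add: mult_ac)
      moreover have "\<mu> powr (- 3 * \<gamma> / 2) = 1 / \<mu> powr (3 * \<gamma> / 2)"
        by (simp add: powr_minus_divide[symmetric])
      ultimately show ?thesis using Gs npos mp by (simp add: AA_def field_simps)
    qed
    have bad: "real n ^ 3 * exp (- c * real n) / Den \<le> AA * e powr dl"
    proof -
      have "G s \<ge> cL * s powr (- (\<gamma> + dl))" by (rule LB[OF sx])
      hence "L s \<ge> cL * s powr (- (\<gamma> + dl)) * s powr \<gamma>" using Ls spos by (simp add: mult_right_mono)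
      also have "cL * s powr (- (\<gamma> + dl)) * s powr \<gamma> = cL * s powr (- dl)"
        using spos by (simp add: mult.assoc powr_add[symmetric])
      finally have Lb: "L s \<ge> cL * s powr (- dl)" .
      have "L s ^ 3 \<ge> (cL * s powr (- dl)) ^ 3" by (rule power_mono[OF Lb]) (use cL_pos in simp)
      also have "(cL * s powr (- dl)) ^ 3 = cL ^ 3 * s powr (- 3 * dl)"
        using spos by (simp add: power_mult_distrib powr_power)
      also have "cL ^ 3 * s powr (- 3 * dl) \<ge> cL ^ 3 * s powr (- 1)"
        by (intro mult_left_mono powr_mono) (use s1 dl_le1 gam1 cL_pos in auto)
      finally have L3b: "L s ^ 3 \<ge> cL ^ 3 / s" using spos by (simp add: powr_minus_divide)
      have "Den \<ge> (cL ^ 3 / s) * 1"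
        unfolding Den_def by (intro mult_mono L3b npow) (use cL_pos spos Lpos in auto)
      moreover have "cL ^ 3 / s \<ge> cL ^ 3 / (\<mu> * real n)"
        using sle spos cL_pos by (intro divide_left_mono) auto
      ultimately have Denb: "Den \<ge> cL ^ 3 / (\<mu> * real n)" by linarith
      have cL3: "cL ^ 3 > 0" using cL_pos by simp
      have "real n ^ 3 * exp (- c * real n) / Den \<le> real n ^ 3 * exp (- c * real n) / (cL ^ 3 / (\<mu> * real n))"
        by (intro divide_left_mono Denb) (use cL3 mp npos Denpos in auto)
      also have "\<dots> = \<mu> / cL ^ 3 * (real n ^ 4 * exp (- c * real n))"
        using cL3 npos mp by (simp add: field_simps power_Suc power_numeral_reduce)
      also have "\<dots> \<le> \<mu> / cL ^ 3 * T"
        using H cL3 mp by (intro mult_left_mono) auto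
      also have "\<mu> / cL ^ 3 * T = AA * e powr dl" using cL3 mp by (simp add: T_def)
      finally show ?thesis .
    qed
    have "measure_pmf.expectation (cm_model n p) (\<lambda>(d, m). tri_out \<mu> n e d m) / Den
       \<le> (real n ^ 3 * (1536 * KK ^ 3 * e powr dl * G s ^ 3) + real n ^ 3 * exp (- c * real n)) / Den"
      by (rule divide_right_mono[OF En]) (use Denpos in simp)
    also have "\<dots> = real n ^ 3 * (1536 * KK ^ 3 * e powr dl * G s ^ 3) / Den + real n ^ 3 * exp (- c * real n) / Den"
      by (simp add: add_divide_distrib)
    also have "\<dots> \<le> AA * e powr dl + AA * e powr dl" using main bad by linarith
    finally show "measure_pmf.expectation (cm_model n p) (\<lambda>(d, m). tri_out \<mu> n e d m)
                      / (L (sqrt (\<mu> * real n)) ^ 3 * real n powr (3 / 2 * (2 - \<gamma>))) \<le> 2 * AA * e powr dl"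
      by (simp add: Den_def s_def)
  qed
qed

lemma main_loc:
  "\<exists>E1 :: real \<Rightarrow> real. (E1 \<longlongrightarrow> 0) (at_right 0) \<and>
           (\<exists>C \<epsilon>0. \<epsilon>0 > 0 \<and> (\<forall>\<epsilon>. 0 < \<epsilon> \<and> \<epsilon> < \<epsilon>0 \<longrightarrow>
              limsup (\<lambda>n. ereal (measure_pmf.expectation (cm_model n p) (\<lambda>(d, m). tri_out \<mu> n \<epsilon> d m)
                      / (L (sqrt (\<mu> * real n)) ^ 3 * real n powr (3 / 2 * (2 - \<gamma>)))))
              \<le> ereal (C * E1 \<epsilon>)))"
proof (intro exI conjI allI impI)
  show "((\<lambda>e. e powr dl) \<longlongrightarrow> 0) (at_right 0)"
  proof (rule tendsto_zero_powrI)
    show "((\<lambda>x. x) \<longlongrightarrow> (0::real)) (at_right 0)" by (rule tendsto_ident_at)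
    show "((\<lambda>x. dl) \<longlongrightarrow> dl) (at_right (0::real))" by simp
    show "eventually (\<lambda>x. 0 \<le> x) (at_right (0::real))"
      using eventually_at_right_less[of "0::real"] by (rule eventually_mono) simp
    show "0 < dl" by (rule dl_pos)
  qed
  show "(1::real) > 0" by simp
  fix e :: real assume e: "0 < e \<and> e < 1"
  show "limsup (\<lambda>n. ereal (measure_pmf.expectation (cm_model n p) (\<lambda>(d, m). tri_out \<mu> n e d m)
                      / (L (sqrt (\<mu> * real n)) ^ 3 * real n powr (3 / 2 * (2 - \<gamma>)))))
              \<le> ereal (2 * AA * e powr dl)"
    by (rule Limsup_bounded) (use ratio_eventually[of e] e in \<open>auto elim: eventually_mono\<close>)
qed

end

theorem lemma4p2:
  fixes p :: "nat pmf" and L :: "real \<Rightarrow> real" and \<gamma> \<mu> :: real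
  assumes tail: "\<forall>t>0. measure_pmf.prob p {k. real k > t} = L t * t powr (- \<gamma>)"
    and sv: "slowly_varying L"
    and gam: "1 < \<gamma>" "\<gamma> < 2"
    and mu: "\<mu> = measure_pmf.expectation p real"
  shows "\<exists>E1 :: real \<Rightarrow> real. (E1 \<longlongrightarrow> 0) (at_right 0) \<and>
           (\<exists>C \<epsilon>0. \<epsilon>0 > 0 \<and> (\<forall>\<epsilon>. 0 < \<epsilon> \<and> \<epsilon> < \<epsilon>0 \<longrightarrow>
              limsup (\<lambda>n. ereal (measure_pmf.expectation (cm_model n p) (\<lambda>(d, m). tri_out \<mu> n \<epsilon> d m)
                      / (L (sqrt (\<mu> * real n)) ^ 3 * real n powr (3 / 2 * (2 - \<gamma>)))))
              \<le> ereal (C * E1 \<epsilon>)))"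
proof -
  interpret lsetup p L \<gamma> \<mu>
    by unfold_locales (use tail sv gam mu in auto)
  show ?thesis by (rule main_loc)
qed

end
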